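(* The function $g_{np}$ is 1-pass tractable.
   Context: For an integer $x>0$ with binary expansion $x=\sum_{j\ge0}a_j2^j$, $a_j\in\{0,1\}$, let $i_x=\min\{j: a_j=1\}$. Define $g_{np}:\mathbb{Z}_{\ge0}\to\mathbb{R}$ by $g_{np}(0)=0$ and $g_{np}(x)=2^{-i_x}$ for $x>0$. Streams: a stream of length $m$ with domain $[n]$ is a list $D=\langle (i_1,\delta_1),\dots,(i_m,\delta_m)\rangle$ with $i_j\in[n]$, $\delta_j\in\mathbb{Z}$; its frequency vector $V(D)=v\in\mathbb{Z}^n$ has $v_i=\sum_{j:i_j=i}\delta_j$. (Turnstile model) there is $M\in\mathbb{N}$ such that the frequency vector of $D$ and of every prefix of $D$ lies in $\{-M,\dots,M\}^n$; throughout $M$ is polynomial in $n$. $\mathcal{D}(n,m)$ is the set of such streams with domain $[n]$ and length at most $m$. A $p$-pass algorithm reads the stream $p$ times in order and may use randomness. For $g:\mathbb{Z}_{\ge0}\to\mathbb{R}$ and $v\in\mathbb{Z}^n$ let $g(v)=\sum_{i=1}^n g(|v_i|)$. The problem $(g,\epsilon)$-SUM is to output $\hat G$ with $P\big((1-\epsilon)g(V(D))\le \hat G\le (1+\epsilon)g(V(D))\big)\ge 2/3$. A function $f:\mathbb{R}_{\ge0}\to\mathbb{R}_{\ge0}$ is sub-polynomial if for every $\alpha>0$, $\lim_{x\to\infty}x^\alpha f(x)=\infty$ and $\lim_{x\to\infty}x^{-\alpha}f(x)=0$. $g$ is $p$-pass tractable if for every sub-polynomial $h$ and every $\epsilon\ge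 1/h(nM)$ there exist a sub-polynomial $h^*$ and a $p$-pass algorithm (with oracle access to $g$) that solves $(g,\epsilon)$-SUM for all streams in $\mathcal{D}(n,m)$ and all $n,M\ge1$ using at most $h^*(nM)$ bits of space in the worst case. *)

theory Defs
  imports "HOL-Probability.Probability_Mass_Function"
begin

definition low_bit :: "nat \<Rightarrow> nat" where
  "low_bit x = (LEAST j. odd (x div 2 ^ j))"

definition g_np :: "nat \<Rightarrow> real" where
  "g_np x = (if x = 0 then 0 else 2 powr (- real (low_bit x)))"

text \<open>Streams: lists of updates (i, delta) with i in [n] = {1..n}.\<close>
type_synonym stream = "(nat \<times> int) list"

definition freq :: "stream \<Rightarrow> nat \<Rightarrow> int" where
  "freq D i = sum_list (map snd (filter (\<lambda>p. fst p = i) D))"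

definition valid_stream :: "nat \<Rightarrow> nat \<Rightarrow> stream \<Rightarrow> bool" where
  "valid_stream n M D \<longleftrightarrow>
     (\<forall>p\<in>set D. fst p \<in> {1..n}) \<and>
     (\<forall>k\<le>length D. \<forall>i. \<bar>freq (take k D) i\<bar> \<le> int M)"

definition gsum :: "(nat \<Rightarrow> real) \<Rightarrow> nat \<Rightarrow> (nat \<Rightarrow> int) \<Rightarrow> real" where
  "gsum g n v = (\<Sum>i=1..n. g (nat \<bar>v i\<bar>))"

text \<open>A randomized one-pass streaming algorithm: memory state is a bit string;
random initial state, random transition per update, random output.\<close>
datatype alg = Alg "bool list pmf" "bool list \<Rightarrow> nat \<times> int \<Rightarrow> bool list pmf" "bool list \<Rightarrow> real pmf"

fun run :: "alg \<Rightarrow> stream \<Rightarrow> bool list pmf" where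
  "run (Alg i st ou) D = foldl (\<lambda>p x. bind_pmf p (\<lambda>s. st s x)) i D"

fun alg_output :: "alg \<Rightarrow> stream \<Rightarrow> real pmf" where
  "alg_output (Alg i st ou) D = bind_pmf (run (Alg i st ou) D) ou"

definition solves_sum :: "(nat \<Rightarrow> real) \<Rightarrow> real \<Rightarrow> nat \<Rightarrow> nat \<Rightarrow> alg \<Rightarrow> real \<Rightarrow> bool" where
  "solves_sum g eps n M A S \<longleftrightarrow>
     (\<forall>D. valid_stream n M D \<longrightarrow>
        (\<forall>k\<le>length D. \<forall>s\<in>set_pmf (run A (take k D)). real (length s) \<le> S) \<and>
        measure_pmf.prob (alg_output A D)
           {G. (1 - eps) * gsum g n (freq D) \<le> G \<and> G \<le> (1 + eps) * gsum g n (freq D)} \<ge> 2/3)"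

definition sub_polynomial :: "(real \<Rightarrow> real) \<Rightarrow> bool" where
  "sub_polynomial f \<longleftrightarrow> (\<forall>x\<ge>0. f x \<ge> 0) \<and>
     (\<forall>\<alpha>>0. filterlim (\<lambda>x. x powr \<alpha> * f x) at_top at_top \<and>
             ((\<lambda>x. x powr (-\<alpha>) * f x) \<longlongrightarrow> 0) at_top)"

definition one_pass_tractable :: "(nat \<Rightarrow> real) \<Rightarrow> bool" where
  "one_pass_tractable g \<longleftrightarrow>
     (\<forall>h eps. sub_polynomial h \<and> (\<forall>n M. eps n M \<ge> 1 / h (real (n * M))) \<longrightarrow>
        (\<exists>hs A. sub_polynomial hs \<and>
           (\<forall>n M. n \<ge> 1 \<and> M \<ge> 1 \<longrightarrow>
              solves_sum g (eps n M) n M (A n M) (hs (real (n * M))))))"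

end

theory Submission
  imports Defs "HOL-Real_Asymp.Real_Asymp"
begin


definition Rowset :: "nat \<Rightarrow> (nat \<Rightarrow> bool) set" where
  "Rowset L = Pi\<^sub>E {..<L} (\<lambda>_. UNIV)"

definition dotp :: "nat \<Rightarrow> (nat \<Rightarrow> bool) \<Rightarrow> (nat \<Rightarrow> bool) \<Rightarrow> bool" where
  "dotp L a z = odd (card {k\<in>{..<L}. a k \<and> z k})"

lemma finite_Rowset[simp]: "finite (Rowset L)"
  unfolding Rowset_def by (intro finite_PiE) auto

lemma card_Rowset: "card (Rowset L) = 2 ^ L"
  unfolding Rowset_def by (subst card_PiE) auto

lemma dotp_xor: "(dotp L a z1 \<noteq> dotp L a z2) = dotp L a (\<lambda>k. z1 k \<noteq> z2 k)"
proof -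
  let ?A = "{k\<in>{..<L}. a k \<and> z1 k}" and ?B = "{k\<in>{..<L}. a k \<and> z2 k}"
  let ?C = "{k\<in>{..<L}. a k \<and> (z1 k \<noteq> z2 k)}"
  have fA: "finite ?A" and fB: "finite ?B" by auto
  have "?C = (?A - ?B) \<union> (?B - ?A)" by auto
  moreover have "card ((?A - ?B) \<union> (?B - ?A)) = card (?A - ?B) + card (?B - ?A)"
    by (rule card_Un_disjoint) auto
  ultimately have cC: "card ?C = card (?A - ?B) + card (?B - ?A)" by argo
  have "card ?A = card (?A - ?B) + card (?A \<inter> ?B)"
  proof -
    have "?A = (?A - ?B) \<union> (?A \<inter> ?B)" by auto
    moreover have "card ((?A - ?B) \<union> (?A \<inter> ?B)) = card (?A - ?B) + card (?A \<inter> ?B)"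
      by (rule card_Un_disjoint) auto
    ultimately show ?thesis by argo
  qed
  moreover have "card ?B = card (?B - ?A) + card (?A \<inter> ?B)"
  proof -
    have "?B = (?B - ?A) \<union> (?A \<inter> ?B)" by auto
    moreover have "card ((?B - ?A) \<union> (?A \<inter> ?B)) = card (?B - ?A) + card (?A \<inter> ?B)"
      by (rule card_Un_disjoint) auto
    ultimately show ?thesis by argo
  qed
  ultimately show ?thesis unfolding dotp_def using cC by auto
qed

lemma dotp_flip:
  assumes "k0 < L" "w k0"
  shows "dotp L (a(k0 := \<not> a k0)) w = (\<not> dotp L a w)"
proof -
  let ?A = "{k\<in>{..<L}. a k \<and> w k}" and ?A' = "{k\<in>{..<L}. (a(k0 := \<not> a k0)) k \<and> w k}"
  show ?thesis
  proof (cases "a k0")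
    case True
    hence "?A = insert k0 ?A'" "k0 \<notin> ?A'" using assms by auto
    hence "card ?A = Suc (card ?A')" by simp
    thus ?thesis unfolding dotp_def by simp
  next
    case False
    hence "?A' = insert k0 ?A" "k0 \<notin> ?A" using assms by auto
    hence "card ?A' = Suc (card ?A)" by simp
    thus ?thesis unfolding dotp_def by simp
  qed
qed

lemma dotp_count:
  assumes "k0 < L" "w k0"
  shows "2 * card {a\<in>Rowset L. dotp L a w = t} = 2 ^ L"
proof -
  define f where "f = (\<lambda>a::nat\<Rightarrow>bool. a(k0 := \<not> a k0))"
  have ff: "f (f a) = a" for a unfolding f_def by auto
  have fR: "a \<in> Rowset L \<Longrightarrow> f a \<in> Rowset L" for a
    using assms(1) unfolding f_def Rowset_def by (auto simp: PiE_iff extensional_def)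
  let ?S = "{a\<in>Rowset L. dotp L a w = t}" and ?S' = "{a\<in>Rowset L. dotp L a w = (\<not>t)}"
  have "f ` ?S = ?S'"
  proof
    have df: "dotp L (f a) w = (\<not> dotp L a w)" for a
      unfolding f_def by (rule dotp_flip[of k0 L w, OF assms])
    show "f ` ?S \<subseteq> ?S'" using fR df by blast
    show "?S' \<subseteq> f ` ?S"
    proof
      fix a assume a: "a \<in> ?S'"
      have "f a \<in> ?S" using a fR df by blast
      thus "a \<in> f ` ?S" using ff by (metis image_eqI)
    qed
  qed
  moreover have inj: "inj_on f ?S" by (metis ff inj_on_inverseI)
  ultimately have cS: "card ?S' = card ?S" using card_image[OF inj] by argo
  have "Rowset L = ?S \<union> ?S'" by auto
  hence "card (Rowset L) = card (?S \<union> ?S')" by argo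
  also have "\<dots> = card ?S + card ?S'" by (rule card_Un_disjoint) auto
  finally have "2 ^ L = card ?S + card ?S" using cS card_Rowset[of L] by argo
  thus ?thesis by simp
qed

lemma card_filter_sum: "finite A \<Longrightarrow> card {x\<in>A. P x} = (\<Sum>x\<in>A. of_bool (P x))"
  by (simp add: sum_of_bool_eq Int_def conj_commute)


definition Seeds :: "nat \<Rightarrow> nat \<Rightarrow> (nat \<Rightarrow> (nat\<Rightarrow>bool) \<times> bool) set" where
  "Seeds L R = Pi\<^sub>E {..<R} (\<lambda>_. Rowset L \<times> UNIV)"

definition hout :: "nat \<Rightarrow> (nat \<Rightarrow> (nat\<Rightarrow>bool) \<times> bool) \<Rightarrow> (nat\<Rightarrow>bool) \<Rightarrow> nat \<Rightarrow> bool" where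
  "hout L s z r = (dotp L (fst (s r)) z \<noteq> snd (s r))"

lemma finite_Seeds[simp]: "finite (Seeds L R)"
  unfolding Seeds_def by (intro finite_PiE) auto

lemma card_Seeds: "card (Seeds L R) = 2 ^ ((L+1)*R)"
proof -
  have "card (Rowset L \<times> (UNIV::bool set)) = 2^(L+1)" by (simp add: card_cartesian_product card_Rowset)
  moreover have "((2::nat)^(L+1))^R = 2^((L+1)*R)" by (simp only: power_mult)
  ultimately show ?thesis unfolding Seeds_def by (simp only: card_PiE finite_lessThan prod_constant card_lessThan)
qed

lemma Seeds_ne: "Seeds L R \<noteq> {}"
  using card_Seeds[of L R] by (metis card.empty power_not_zero zero_neq_numeral)

lemma seeds_prod:
  "card {s\<in>Seeds L R. \<forall>r<R. Q r (s r)} = (\<Prod>r<R. card {ac\<in>Rowset L \<times> UNIV. Q r ac})"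
proof -
  have "{s\<in>Seeds L R. \<forall>r<R. Q r (s r)} = Pi\<^sub>E {..<R} (\<lambda>r. {ac\<in>Rowset L \<times> UNIV. Q r ac})"
    unfolding Seeds_def by (simp add: PiE_iff set_eq_iff) blast
  thus ?thesis by (simp add: card_PiE)
qed

lemma sum_bool_UNIV: "(\<Sum>c\<in>(UNIV::bool set). f c) = f True + f False"
  by (simp add: UNIV_bool add.commute)

lemma row_single:
  "card {ac\<in>Rowset L \<times> (UNIV::bool set). P (dotp L (fst ac) z \<noteq> snd ac)}
     = 2^L * (of_bool (P True) + of_bool (P False))"
proof -
  have "card {ac\<in>Rowset L \<times> (UNIV::bool set). P (dotp L (fst ac) z \<noteq> snd ac)}
      = (\<Sum>ac\<in>Rowset L \<times> (UNIV::bool set). of_bool (P (dotp L (fst ac) z \<noteq> snd ac)))"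
    by (rule card_filter_sum) simp
  also have "\<dots> = (\<Sum>a\<in>Rowset L. \<Sum>c\<in>(UNIV::bool set). of_bool (P (dotp L a z \<noteq> c)))"
    by (simp only: sum.cartesian_product' fst_conv snd_conv)
  also have "\<dots> = (\<Sum>a\<in>Rowset L. of_bool (P True) + of_bool (P False))"
    by (intro sum.cong refl, case_tac "dotp L x z") (simp_all add: sum_bool_UNIV add.commute)
  finally show ?thesis by (simp add: card_Rowset)
qed

definition pc :: "(bool \<Rightarrow> bool \<Rightarrow> bool) \<Rightarrow> nat" where
  "pc P = of_bool (P True True) + of_bool (P False False) + of_bool (P True False) + of_bool (P False True)"

lemma row_pair:
  assumes "k0 < L" "z1 k0 \<noteq> z2 k0"
  shows "2 * card {ac\<in>Rowset L \<times> (UNIV::bool set). P (dotp L (fst ac) z1 \<noteq> snd ac) (dotp L (fst ac) z2 \<noteq> snd ac)}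
     = 2^L * pc P"
proof -
  define w where "w = (\<lambda>k. z1 k \<noteq> z2 k)"
  have wk: "w k0" using assms(2) unfolding w_def by simp
  let ?X = "of_bool (P True True) + of_bool (P False False) :: nat"
  let ?Y = "of_bool (P True False) + of_bool (P False True) :: nat"
  have "card {ac\<in>Rowset L \<times> (UNIV::bool set). P (dotp L (fst ac) z1 \<noteq> snd ac) (dotp L (fst ac) z2 \<noteq> snd ac)}
      = (\<Sum>ac\<in>Rowset L \<times> (UNIV::bool set). of_bool (P (dotp L (fst ac) z1 \<noteq> snd ac) (dotp L (fst ac) z2 \<noteq> snd ac)))"
    by (rule card_filter_sum) simp
  also have "\<dots> = (\<Sum>a\<in>Rowset L. \<Sum>c\<in>(UNIV::bool set). of_bool (P (dotp L a z1 \<noteq> c) (dotp L a z2 \<noteq> c)))"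
    by (simp only: sum.cartesian_product' fst_conv snd_conv)
  also have "\<dots> = (\<Sum>a\<in>Rowset L. if dotp L a w then ?Y else ?X)"
  proof (intro sum.cong refl)
    fix a
    have "(dotp L a z1 \<noteq> dotp L a z2) = dotp L a w" unfolding w_def by (rule dotp_xor)
    thus "(\<Sum>c\<in>(UNIV::bool set). of_bool (P (dotp L a z1 \<noteq> c) (dotp L a z2 \<noteq> c))) = (if dotp L a w then ?Y else ?X)"
      by (cases "dotp L a z1"; cases "dotp L a z2"; simp add: sum_bool_UNIV)
  qed
  also have "\<dots> = card {a\<in>Rowset L. dotp L a w = True} * ?Y + card {a\<in>Rowset L. dotp L a w = False} * ?X"
    by (simp add: sum.If_cases Int_def conj_commute)
  finally have e: "card {ac\<in>Rowset L \<times> (UNIV::bool set). P (dotp L (fst ac) z1 \<noteq> snd ac) (dotp L (fst ac) z2 \<noteq> snd ac)}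
     = card {a\<in>Rowset L. dotp L a w = True} * ?Y + card {a\<in>Rowset L. dotp L a w = False} * ?X" .
  have c1: "2 * card {a\<in>Rowset L. dotp L a w = True} = 2^L" by (rule dotp_count[of k0 L w, OF assms(1) wk])
  have c0: "2 * card {a\<in>Rowset L. dotp L a w = False} = 2^L" by (rule dotp_count[of k0 L w, OF assms(1) wk])
  have "2 * card {ac\<in>Rowset L \<times> (UNIV::bool set). P (dotp L (fst ac) z1 \<noteq> snd ac) (dotp L (fst ac) z2 \<noteq> snd ac)}
     = (2 * card {a\<in>Rowset L. dotp L a w = True}) * ?Y + (2 * card {a\<in>Rowset L. dotp L a w = False}) * ?X"
    unfolding e by (simp only: add_mult_distrib2 mult.assoc)
  also have "\<dots> = 2^L * pc P" unfolding c0 c1 pc_def by (simp only: add_mult_distrib2 add.assoc add.commute add.left_commute)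
  finally show ?thesis .
qed


definition bits :: "nat \<Rightarrow> nat \<Rightarrow> bool" where "bits i k = odd (i div 2^k)"

lemma bits_distinct: "x < 2^L \<Longrightarrow> y < 2^L \<Longrightarrow> x \<noteq> y \<Longrightarrow> \<exists>k<L. bits x k \<noteq> bits y k"
proof (induction L arbitrary: x y)
  case 0 thus ?case by simp
next
  case (Suc L)
  show ?case
  proof (cases "odd x = odd y")
    case False thus ?thesis by (intro exI[of _ 0]) (auto simp: bits_def)
  next
    case True
    have "x div 2 \<noteq> y div 2" using True Suc.prems(3)
      by (metis dvd_mult_div_cancel odd_two_times_div_two_succ)
    moreover have "x div 2 < 2^L" "y div 2 < 2^L" using Suc.prems by auto
    ultimately obtain k where "k < L" "bits (x div 2) k \<noteq> bits (y div 2) k" using Suc.IH by blast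
    moreover have "bits (x div 2) k = bits x (Suc k)" "bits (y div 2) k = bits y (Suc k)"
      by (simp_all add: bits_def div_mult2_eq)
    ultimately show ?thesis by (intro exI[of _ "Suc k"]) auto
  qed
qed

definition samp :: "nat \<Rightarrow> (nat \<Rightarrow> (nat\<Rightarrow>bool) \<times> bool) \<Rightarrow> nat \<Rightarrow> nat \<Rightarrow> bool" where
  "samp L s l i = (\<forall>r<l. \<not> hout L s (bits i) r)"

definition bkt :: "nat \<Rightarrow> nat \<Rightarrow> (nat \<Rightarrow> (nat\<Rightarrow>bool) \<times> bool) \<Rightarrow> nat \<Rightarrow> (nat \<Rightarrow> bool)" where
  "bkt L b s i = restrict (\<lambda>r. hout L s (bits i) (L+r)) {..<b}"

lemma samp0[simp]: "samp L s 0 i" by (simp add: samp_def)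

lemma prod_split_add: "(\<Prod>r<(L::nat)+(m::nat). f r) = (\<Prod>r<L. f r) * (\<Prod>r<m. f (L+r)::nat)"
  by (induct m) (auto simp: mult.assoc)

lemma prod_split_le: "(l::nat) \<le> L \<Longrightarrow> (\<Prod>r<L. f r) = (\<Prod>r<l. f r) * (\<Prod>r<L-l. f (l+r)::nat)"
  using prod_split_add[of f l "L-l"] by simp

lemma count_E1:
  assumes "l \<le> L"
  shows "card {s\<in>Seeds L (L+b). samp L s l i} * 2^l = card (Seeds L (L+b))"
proof -
  let ?R = "L+b"
  have "{s\<in>Seeds L ?R. samp L s l i} = {s\<in>Seeds L ?R. \<forall>r<?R. (\<lambda>r ac. r < l \<longrightarrow> \<not> (dotp L (fst ac) (bits i) \<noteq> snd ac)) r (s r)}"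
    using assms unfolding samp_def hout_def by auto
  hence "card {s\<in>Seeds L ?R. samp L s l i} = card {s\<in>Seeds L ?R. \<forall>r<?R. (\<lambda>r ac. r < l \<longrightarrow> \<not> (dotp L (fst ac) (bits i) \<noteq> snd ac)) r (s r)}"
    by (rule arg_cong)
  also have "\<dots> = (\<Prod>r<?R. card {ac\<in>Rowset L \<times> UNIV. r < l \<longrightarrow> \<not> (dotp L (fst ac) (bits i) \<noteq> snd ac)})"
    by (rule seeds_prod)
  also have "\<dots> = (\<Prod>r<?R. 2^L * (if r < l then 1 else 2))"
    by (intro prod.cong refl, subst row_single[where P="\<lambda>p. _ \<longrightarrow> \<not> p"]) auto
  also have "\<dots> = (2^L)^?R * (\<Prod>r<?R. (if r < l then 1 else 2))"
    by (simp add: prod.distrib)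
  also have "(\<Prod>r<?R. (if r < l then 1 else 2::nat)) = 2^(?R - l)"
    using prod_split_le[of l ?R "\<lambda>r. if r < l then 1 else 2"] assms by simp
  finally have "card {s\<in>Seeds L ?R. samp L s l i} * 2^l = (2^L)^?R * 2^(?R-l) * 2^l" by simp
  also have "\<dots> = 2^(L*?R + (?R-l) + l)" by (simp only: power_add power_mult)
  also have "L*?R + (?R-l) + l = (L+1)*?R" using assms by simp
  finally show ?thesis by (simp add: card_Seeds)
qed

lemma pair_count_gen:
  assumes "x < 2^L" "y < 2^L" "x \<noteq> y"
  shows "2^R * card {s\<in>Seeds L R. \<forall>r<R. P r (hout L s (bits x) r) (hout L s (bits y) r)} = (\<Prod>r<R. 2^L * pc (P r))"
proof -
  obtain k0 where k0: "k0 < L" "bits x k0 \<noteq> bits y k0" using bits_distinct[OF assms] by blast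
  have "card {s\<in>Seeds L R. \<forall>r<R. P r (hout L s (bits x) r) (hout L s (bits y) r)}
     = (\<Prod>r<R. card {ac\<in>Rowset L \<times> UNIV. P r (dotp L (fst ac) (bits x) \<noteq> snd ac) (dotp L (fst ac) (bits y) \<noteq> snd ac)})"
    unfolding hout_def by (rule seeds_prod)
  hence "2^R * card {s\<in>Seeds L R. \<forall>r<R. P r (hout L s (bits x) r) (hout L s (bits y) r)}
     = (\<Prod>r<R. 2 * card {ac\<in>Rowset L \<times> UNIV. P r (dotp L (fst ac) (bits x) \<noteq> snd ac) (dotp L (fst ac) (bits y) \<noteq> snd ac)})"
    by (simp add: prod.distrib)
  also have "\<dots> = (\<Prod>r<R. 2^L * pc (P r))"
    by (intro prod.cong refl row_pair[of k0 L "bits x" "bits y", OF k0])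
  finally show ?thesis .
qed

lemma count_E2:
  assumes "l \<le> L" "x < 2^L" "y < 2^L" "x \<noteq> y"
  shows "card {s\<in>Seeds L (L+b). samp L s l x \<and> samp L s l y} * 4^l = card (Seeds L (L+b))"
proof -
  let ?R = "L+b"
  let ?P = "\<lambda>r p q. r < l \<longrightarrow> \<not> p \<and> \<not> q"
  have "{s\<in>Seeds L ?R. samp L s l x \<and> samp L s l y} = {s\<in>Seeds L ?R. \<forall>r<?R. ?P r (hout L s (bits x) r) (hout L s (bits y) r)}"
    using assms unfolding samp_def by auto
  hence "2^?R * card {s\<in>Seeds L ?R. samp L s l x \<and> samp L s l y} = (\<Prod>r<?R. 2^L * pc (?P r))"
    using pair_count_gen[OF assms(2-4), of ?R ?P] by simp
  also have "\<dots> = (\<Prod>r<?R. 2^L * (if r < l then 1 else 4))"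
    by (intro prod.cong refl) (auto simp: pc_def)
  also have "\<dots> = (2^L)^?R * (\<Prod>r<?R. (if r < l then 1 else 4))"
    by (simp add: prod.distrib)
  also have "(\<Prod>r<?R. (if r < l then 1 else 4::nat)) = 4^(?R - l)"
    using prod_split_le[of l ?R "\<lambda>r. if r < l then 1 else 4"] assms by simp
  finally have e: "2^?R * card {s\<in>Seeds L ?R. samp L s l x \<and> samp L s l y} = (2^L)^?R * 4^(?R - l)" .
  have "2^?R * (card {s\<in>Seeds L ?R. samp L s l x \<and> samp L s l y} * 4^l) = (2^L)^?R * 4^(?R - l) * 4^l"
    using e by (simp add: algebra_simps)
  also have "\<dots> = (2^L)^?R * 4^(?R - l + l)" by (simp only: power_add mult.assoc)
  also have "?R - l + l = ?R" using assms(1) by simp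
  also have "(4::nat)^?R = 2^(2*?R)" by (subst power_mult) simp
  also have "((2::nat)^L)^?R * 2^(2*?R) = 2^(L*?R + 2*?R)" by (simp only: power_add power_mult)
  also have "L*?R + 2*?R = ?R + (L+1)*?R" by simp
  also have "(2::nat)^(?R + (L+1)*?R) = 2^?R * 2^((L+1)*?R)" by (simp only: power_add)
  finally show ?thesis by (simp add: card_Seeds)
qed

lemma count_E3:
  assumes "l \<le> L" "x < 2^L" "y < 2^L" "x \<noteq> y"
  shows "card {s\<in>Seeds L (L+b). samp L s l x \<and> samp L s l y \<and> bkt L b s x = bkt L b s y} * 4^l * 2^b
     = card (Seeds L (L+b))"
proof -
  let ?R = "L+b"
  let ?P = "\<lambda>r p q. (r < l \<longrightarrow> \<not> p \<and> \<not> q) \<and> (L \<le> r \<longrightarrow> p = q)"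
  have "{s\<in>Seeds L ?R. samp L s l x \<and> samp L s l y \<and> bkt L b s x = bkt L b s y}
      = {s\<in>Seeds L ?R. \<forall>r<?R. ?P r (hout L s (bits x) r) (hout L s (bits y) r)}"
  proof -
    have "bkt L b s x = bkt L b s y \<longleftrightarrow> (\<forall>r<?R. L \<le> r \<longrightarrow> hout L s (bits x) r = hout L s (bits y) r)" for s
    proof
      assume h: "bkt L b s x = bkt L b s y"
      show "\<forall>r<?R. L \<le> r \<longrightarrow> hout L s (bits x) r = hout L s (bits y) r"
      proof (intro allI impI)
        fix r assume "r < ?R" "L \<le> r"
        hence "r - L < b" by simp
        hence "bkt L b s x (r - L) = bkt L b s y (r - L)" using h by simp
        thus "hout L s (bits x) r = hout L s (bits y) r" using \<open>r-L<b\<close> \<open>L \<le> r\<close> by (simp add: bkt_def)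
      qed
    next
      assume h: "\<forall>r<?R. L \<le> r \<longrightarrow> hout L s (bits x) r = hout L s (bits y) r"
      show "bkt L b s x = bkt L b s y" unfolding bkt_def
        by (rule restrict_ext) (use h in auto)
    qed
    thus ?thesis using assms(1) unfolding samp_def by auto
  qed
  hence "2^?R * card {s\<in>Seeds L ?R. samp L s l x \<and> samp L s l y \<and> bkt L b s x = bkt L b s y} = (\<Prod>r<?R. 2^L * pc (?P r))"
    using pair_count_gen[OF assms(2-4), of ?R ?P] by simp
  also have "\<dots> = (2^L)^?R * (\<Prod>r<?R. pc (?P r))"
    by (simp add: prod.distrib)
  also have "(\<Prod>r<?R. pc (?P r)) = (\<Prod>r<l. pc (?P r)) * (\<Prod>r<L-l. pc (?P (l+r))) * (\<Prod>r<b. pc (?P (L+r)))"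
    using prod_split_add[of "\<lambda>r. pc (?P r)" L b] prod_split_le[of l L "\<lambda>r. pc (?P r)"] assms(1) by simp
  also have "(\<Prod>r<l. pc (?P r)) = 1" using assms(1) by (intro prod.neutral) (auto simp: pc_def)
  also have "(\<Prod>r<L-l. pc (?P (l+r))) = 4^(L-l)"
    by (subst prod.cong[OF refl, where h="\<lambda>_. 4"]) (auto simp: pc_def)
  also have "(\<Prod>r<b. pc (?P (L+r))) = 2^b"
    using assms(1) by (subst prod.cong[OF refl, where h="\<lambda>_. 2"]) (auto simp: pc_def)
  finally have e: "2^?R * card {s\<in>Seeds L ?R. samp L s l x \<and> samp L s l y \<and> bkt L b s x = bkt L b s y} = (2^L)^?R * (4^(L-l) * 2^b)" by simp
  have "2^?R * (card {s\<in>Seeds L ?R. samp L s l x \<and> samp L s l y \<and> bkt L b s x = bkt L b s y} * 4^l * 2^b) = (2^L)^?R * (4^(L-l) * 2^b) * 4^l * 2^b"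
    using e by (simp add: algebra_simps)
  also have "\<dots> = (2^L)^?R * 4^(L-l+l) * (2^b * 2^b)" by (simp only: power_add mult_ac)
  also have "L-l+l = L" using assms(1) by simp
  also have "(4::nat)^L = 2^(2*L)" by (subst power_mult) simp
  also have "((2::nat)^L)^?R * 2^(2*L) * (2^b * 2^b) = 2^(L*?R + 2*L + b + b)" by (simp only: power_add power_mult mult.assoc)
  also have "L*?R + 2*L + b + b = ?R + (L+1)*?R" by simp
  also have "(2::nat)^(?R + (L+1)*?R) = 2^?R * 2^((L+1)*?R)" by (simp only: power_add)
  finally show ?thesis by (simp add: card_Seeds)
qed


definition Ycnt :: "nat \<Rightarrow> (nat \<Rightarrow> (nat\<Rightarrow>bool) \<times> bool) \<Rightarrow> nat \<Rightarrow> nat set \<Rightarrow> nat" where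
  "Ycnt L s l T = card {i\<in>T. samp L s l i}"

definition C2cnt :: "nat \<Rightarrow> nat \<Rightarrow> (nat \<Rightarrow> (nat\<Rightarrow>bool) \<times> bool) \<Rightarrow> nat \<Rightarrow> nat set \<Rightarrow> nat" where
  "C2cnt L b s l T = card {p\<in>T\<times>T. fst p \<noteq> snd p \<and> samp L s l (fst p) \<and> samp L s l (snd p) \<and> bkt L b s (fst p) = bkt L b s (snd p)}"

lemma card_filter_real: "finite A \<Longrightarrow> real (card {x\<in>A. P x}) = (\<Sum>x\<in>A. of_bool (P x))"
  by (subst card_filter_sum) auto

lemma E1_real:
  assumes "l \<le> L"
  shows "real (card {s\<in>Seeds L (L+b). samp L s l i}) = real (card (Seeds L (L+b))) / 2^l"
proof -
  have "real (card {s\<in>Seeds L (L+b). samp L s l i}) * 2^l = real (card (Seeds L (L+b)))"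
    using arg_cong[where f=real, OF count_E1[OF assms, of b i]] by simp
  thus ?thesis by (simp add: field_simps)
qed

lemma E2_real:
  assumes "l \<le> L" "x < 2^L" "y < 2^L" "x \<noteq> y"
  shows "real (card {s\<in>Seeds L (L+b). samp L s l x \<and> samp L s l y}) = real (card (Seeds L (L+b))) / 4^l"
proof -
  have "real (card {s\<in>Seeds L (L+b). samp L s l x \<and> samp L s l y}) * 4^l = real (card (Seeds L (L+b)))"
    using arg_cong[where f=real, OF count_E2[OF assms, of b]] by simp
  thus ?thesis by (simp add: field_simps)
qed

lemma E3_real:
  assumes "l \<le> L" "x < 2^L" "y < 2^L" "x \<noteq> y"
  shows "real (card {s\<in>Seeds L (L+b). samp L s l x \<and> samp L s l y \<and> bkt L b s x = bkt L b s y})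
     = real (card (Seeds L (L+b))) / (4^l * 2^b)"
proof -
  have "real (card {s\<in>Seeds L (L+b). samp L s l x \<and> samp L s l y \<and> bkt L b s x = bkt L b s y}) * 4^l * 2^b = real (card (Seeds L (L+b)))"
    using arg_cong[where f=real, OF count_E3[OF assms, of b]] by simp
  thus ?thesis by (simp add: field_simps)
qed

lemma E1_sum:
  assumes "l \<le> L"
  shows "(\<Sum>s\<in>Seeds L (L+b). of_bool (samp L s l i)) = real (card (Seeds L (L+b))) / 2^l"
proof -
  have "(\<Sum>s\<in>Seeds L (L+b). of_bool (samp L s l i)) = real (card {s\<in>Seeds L (L+b). samp L s l i})"
    by (rule card_filter_real[symmetric]) simp
  also have "\<dots> = real (card (Seeds L (L+b))) / 2^l" by (rule E1_real[OF assms])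
  finally show ?thesis .
qed

lemma E2_sum:
  assumes "l \<le> L" "x < 2^L" "y < 2^L" "x \<noteq> y"
  shows "(\<Sum>s\<in>Seeds L (L+b). of_bool (samp L s l x \<and> samp L s l y)) = real (card (Seeds L (L+b))) / 4^l"
proof -
  have "(\<Sum>s\<in>Seeds L (L+b). of_bool (samp L s l x \<and> samp L s l y)) = real (card {s\<in>Seeds L (L+b). samp L s l x \<and> samp L s l y})"
    by (rule card_filter_real[symmetric]) simp
  also have "\<dots> = real (card (Seeds L (L+b))) / 4^l" by (rule E2_real[OF assms])
  finally show ?thesis .
qed

lemma E3_sum:
  assumes "l \<le> L" "x < 2^L" "y < 2^L" "x \<noteq> y"
  shows "(\<Sum>s\<in>Seeds L (L+b). of_bool (samp L s l x \<and> samp L s l y \<and> bkt L b s x = bkt L b s y))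
     = real (card (Seeds L (L+b))) / (4^l * 2^b)"
proof -
  have "(\<Sum>s\<in>Seeds L (L+b). of_bool (samp L s l x \<and> samp L s l y \<and> bkt L b s x = bkt L b s y))
      = real (card {s\<in>Seeds L (L+b). samp L s l x \<and> samp L s l y \<and> bkt L b s x = bkt L b s y})"
    by (rule card_filter_real[symmetric]) simp
  also have "\<dots> = real (card (Seeds L (L+b))) / (4^l * 2^b)" by (rule E3_real[OF assms])
  finally show ?thesis .
qed

lemma of_bool_and_real: "(of_bool (P \<and> Q) :: real) = of_bool P * of_bool Q" by simp

lemma pow2_sq: "((2::real)^l)^2 = 4^l"
  by (simp add: power2_eq_square power_mult_distrib[symmetric])

lemma sum_delta_const:
  assumes "finite T"
  shows "(\<Sum>i\<in>T. \<Sum>k\<in>T. if i = k then a else (c::real)) = real (card T) * a + real (card T) * (real (card T) - 1) * c"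
proof -
  have "(\<Sum>k\<in>T. if i = k then a else c) = a + (real (card T) - 1) * c" if "i \<in> T" for i
  proof -
    have "(\<Sum>k\<in>T. if i = k then a else c) = (\<Sum>k\<in>T. c + (if i = k then a - c else 0))"
      by (intro sum.cong) auto
    also have "\<dots> = real (card T) * c + (a - c)" using assms that by (simp add: sum.distrib)
    finally show ?thesis by (simp add: algebra_simps)
  qed
  hence "(\<Sum>i\<in>T. \<Sum>k\<in>T. if i = k then a else c) = (\<Sum>i\<in>T. a + (real (card T) - 1) * c)"
    by (intro sum.cong) auto
  thus ?thesis by (simp add: algebra_simps)
qed

context
  fixes L b l :: nat and T :: "nat set"
  assumes lL: "l \<le> L" and fT: "finite T" and TL: "T \<subseteq> {..<2^L}"
begin

abbreviation "SS \<equiv> Seeds L (L+b)"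

lemma sumY: "(\<Sum>s\<in>SS. real (Ycnt L s l T)) = real (card SS) * (real (card T) / 2^l)"
proof -
  have "(\<Sum>s\<in>SS. real (Ycnt L s l T)) = (\<Sum>s\<in>SS. \<Sum>i\<in>T. of_bool (samp L s l i))"
    unfolding Ycnt_def using fT by (simp add: card_filter_real)
  also have "\<dots> = (\<Sum>i\<in>T. \<Sum>s\<in>SS. of_bool (samp L s l i))" by (rule sum.swap)
  also have "\<dots> = (\<Sum>i\<in>T. real (card SS) / 2^l)"
    by (intro sum.cong refl E1_sum[OF lL])
  finally show ?thesis by simp
qed

lemma sumY2: "(\<Sum>s\<in>SS. real (Ycnt L s l T)^2)
   = real (card SS) * (real (card T) / 2^l + real (card T) * (real (card T) - 1) / 4^l)"
proof -
  have "(\<Sum>s\<in>SS. real (Ycnt L s l T)^2) = (\<Sum>s\<in>SS. \<Sum>i\<in>T. \<Sum>k\<in>T. of_bool (samp L s l i \<and> samp L s l k))"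
  proof (intro sum.cong refl)
    fix s
    have "real (Ycnt L s l T)^2 = (\<Sum>i\<in>T. of_bool (samp L s l i)) * (\<Sum>k\<in>T. of_bool (samp L s l k))"
      unfolding Ycnt_def using fT by (simp add: card_filter_real power2_eq_square)
    also have "\<dots> = (\<Sum>i\<in>T. \<Sum>k\<in>T. of_bool (samp L s l i \<and> samp L s l k))"
      by (simp only: sum_product of_bool_and_real)
    finally show "real (Ycnt L s l T)^2 = (\<Sum>i\<in>T. \<Sum>k\<in>T. of_bool (samp L s l i \<and> samp L s l k))" .
  qed
  also have "\<dots> = (\<Sum>i\<in>T. \<Sum>s\<in>SS. \<Sum>k\<in>T. of_bool (samp L s l i \<and> samp L s l k))" by (rule sum.swap)
  also have "\<dots> = (\<Sum>i\<in>T. \<Sum>k\<in>T. \<Sum>s\<in>SS. of_bool (samp L s l i \<and> samp L s l k))"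
    by (intro sum.cong refl sum.swap)
  also have "\<dots> = (\<Sum>i\<in>T. \<Sum>k\<in>T. if i = k then real (card SS) / 2^l else real (card SS) / 4^l)"
  proof (intro sum.cong refl)
    fix i k assume i: "i \<in> T" and k: "k \<in> T"
    show "(\<Sum>s\<in>SS. of_bool (samp L s l i \<and> samp L s l k)) = (if i = k then real (card SS) / 2^l else real (card SS) / 4^l)"
    proof (cases "i = k")
      case True thus ?thesis using E1_sum[OF lL, where b=b and i=i] by (simp only: True if_True conj_absorb)
    next
      case False
      have i2: "i < 2^L" and k2: "k < 2^L" using i k TL by auto
      show ?thesis using E2_sum[OF lL i2 k2 False, where b=b] False by (simp only: if_False)
    qed
  qed
  also have "\<dots> = real (card T) * (real (card SS) / 2^l) + real (card T) * (real (card T) - 1) * (real (card SS) / 4^l)"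
    by (rule sum_delta_const[OF fT])
  finally show ?thesis by (simp add: algebra_simps)
qed

lemma varY: "(\<Sum>s\<in>SS. (real (Ycnt L s l T) - real (card T) / 2^l)^2) \<le> real (card SS) * (real (card T) / 2^l)"
proof -
  define \<mu> where "\<mu> = real (card T) / 2^l"
  define N where "N = real (card T)"
  have "(\<Sum>s\<in>SS. (real (Ycnt L s l T) - \<mu>)^2)
      = (\<Sum>s\<in>SS. real (Ycnt L s l T)^2) - 2 * \<mu> * (\<Sum>s\<in>SS. real (Ycnt L s l T)) + real (card SS) * \<mu>^2"
    by (simp add: power2_diff sum.distrib sum_subtractf sum_distrib_left algebra_simps)
  also have "\<dots> = real (card SS) * (\<mu> + N * (N - 1) / 4^l - \<mu>^2)"
    unfolding sumY2 sumY \<mu>_def N_def by (simp add: algebra_simps power2_eq_square)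
  also have "N * (N - 1) / 4^l \<le> \<mu>^2"
  proof -
    have "\<mu>^2 = N^2 / 4^l" unfolding \<mu>_def N_def by (simp only: power_divide pow2_sq)
    moreover have "N * (N - 1) \<le> N^2" unfolding N_def by (simp add: power2_eq_square algebra_simps)
    ultimately show ?thesis by (simp add: divide_right_mono)
  qed
  hence "real (card SS) * (\<mu> + N * (N - 1) / 4^l - \<mu>^2) \<le> real (card SS) * \<mu>"
    by (intro mult_left_mono) auto
  finally show ?thesis unfolding \<mu>_def .
qed

lemma sumC2: "(\<Sum>s\<in>SS. real (C2cnt L b s l T)) \<le> real (card SS) * (real (card T) / 2^l)^2 / 2^b"
proof -
  let ?P = "\<lambda>s p. fst p \<noteq> snd p \<and> samp L s l (fst p) \<and> samp L s l (snd p) \<and> bkt L b s (fst p) = bkt L b s (snd p)"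
  have "(\<Sum>s\<in>SS. real (C2cnt L b s l T)) = (\<Sum>s\<in>SS. \<Sum>p\<in>T\<times>T. of_bool (?P s p))"
    unfolding C2cnt_def using fT by (simp add: card_filter_real)
  also have "\<dots> = (\<Sum>p\<in>T\<times>T. \<Sum>s\<in>SS. of_bool (?P s p))" by (rule sum.swap)
  also have "\<dots> = (\<Sum>p\<in>T\<times>T. if fst p = snd p then 0 else real (card SS) / (4^l * 2^b))"
  proof (intro sum.cong refl)
    fix p assume p: "p \<in> T \<times> T"
    show "(\<Sum>s\<in>SS. of_bool (?P s p)) = (if fst p = snd p then 0 else real (card SS) / (4^l * 2^b))"
    proof (cases "fst p = snd p")
      case True thus ?thesis by simp
    next
      case False
      have i2: "fst p < 2^L" and k2: "snd p < 2^L" using p TL by auto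
      show ?thesis using E3_sum[OF lL i2 k2 False, where b=b] False by (simp only: if_False simp_thms)
    qed
  qed
  also have "\<dots> = (\<Sum>i\<in>T. \<Sum>k\<in>T. if i = k then 0 else real (card SS) / (4^l * 2^b))"
    by (subst sum.cartesian_product) (simp add: split_beta)
  also have "\<dots> = real (card T) * (real (card T) - 1) * (real (card SS) / (4^l * 2^b))"
    using sum_delta_const[OF fT, of 0] by simp
  also have "\<dots> \<le> real (card T) * real (card T) * (real (card SS) / (4^l * 2^b))"
    by (intro mult_right_mono mult_left_mono) auto
  also have "\<dots> = real (card SS) * (real (card T) / 2^l)^2 / 2^b"
    by (simp only: power_divide pow2_sq) (simp add: power2_eq_square field_simps)
  finally show ?thesis .
qed

end

lemma chebyshev_count:
  assumes "finite S" "t > 0"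
  shows "real (card {s\<in>S. t \<le> \<bar>f s - m\<bar>}) * t^2 \<le> (\<Sum>s\<in>S. (f s - m)^2)"
proof -
  have "real (card {s\<in>S. t \<le> \<bar>f s - m\<bar>}) * t^2 = (\<Sum>s\<in>S. of_bool (t \<le> \<bar>f s - m\<bar>) * t^2)"
    using assms(1) by (simp add: card_filter_real sum_distrib_right)
  also have "\<dots> \<le> (\<Sum>s\<in>S. (f s - m)^2)"
  proof (intro sum_mono)
    fix s
    show "of_bool (t \<le> \<bar>f s - m\<bar>) * t^2 \<le> (f s - m)^2"
    proof (cases "t \<le> \<bar>f s - m\<bar>")
      case True
      hence "t^2 \<le> \<bar>f s - m\<bar>^2" using assms(2) by (intro power_mono) auto
      thus ?thesis using True by simp
    qed simp
  qed
  finally show ?thesis .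
qed

lemma markov_count:
  assumes "finite S" "t > 0" "\<And>s. s \<in> S \<Longrightarrow> f s \<ge> 0"
  shows "real (card {s\<in>S. t < f s}) * t \<le> (\<Sum>s\<in>S. f s)"
proof -
  have "real (card {s\<in>S. t < f s}) * t = (\<Sum>s\<in>S. of_bool (t < f s) * t)"
    using assms(1) by (simp add: card_filter_real sum_distrib_right)
  also have "\<dots> \<le> (\<Sum>s\<in>S. f s)"
    by (intro sum_mono) (use assms in auto)
  finally show ?thesis .
qed


definition lhat :: "nat \<Rightarrow> (nat \<Rightarrow> real) \<Rightarrow> real \<Rightarrow> nat" where
  "lhat Lv Z K = (if \<exists>l\<le>Lv. K \<le> Z l then Max {l. l \<le> Lv \<and> K \<le> Z l} else 0)"

lemma est_det:
  fixes Z Y C :: "nat \<Rightarrow> real" and N :: nat and K e :: real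
  defines "\<mu> \<equiv> (\<lambda>l::nat. real N / 2^l)"
  assumes e: "0 < e" "e \<le> 1/2" and K: "1 \<le> K" and NL: "real N < 2^Lv"
    and Y0: "Y 0 = real N"
    and ZY: "\<And>l. l \<le> Lv \<Longrightarrow> Y l - C l \<le> Z l \<and> Z l \<le> Y l"
    and G1: "\<And>l. l \<le> Lv \<Longrightarrow> \<mu> l < K/2 \<Longrightarrow> Y l < K"
    and G2: "\<And>l. l \<le> Lv \<Longrightarrow> K/2 \<le> \<mu> l \<Longrightarrow> \<mu> l < 4*K \<Longrightarrow> \<bar>Y l - \<mu> l\<bar> \<le> e * \<mu> l / 2"
    and G3: "\<And>l. l \<le> Lv \<Longrightarrow> \<mu> l < 4*K \<Longrightarrow> C l \<le> e * \<mu> l / 2"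
  shows "\<bar>Z (lhat Lv Z K) * 2^(lhat Lv Z K) - real N\<bar> \<le> e * real N"
proof -
  have mu_mono: "l \<le> l' \<Longrightarrow> \<mu> l' \<le> \<mu> l" for l l'
    unfolding \<mu>_def by (intro divide_left_mono) (auto intro: power_increasing)
  have mu_Suc: "\<mu> l = 2 * \<mu> (Suc l)" for l unfolding \<mu>_def by (simp add: field_simps)
  have mu_mult: "\<mu> l * 2^l = real N" for l unfolding \<mu>_def by simp
  have mu_nn: "0 \<le> \<mu> l" for l unfolding \<mu>_def by simp
  have acc: "\<bar>Z l * 2^l - real N\<bar> \<le> e * real N" if "l \<le> Lv" "K/2 \<le> \<mu> l" "\<mu> l < 4*K" for l
  proof -
    have a: "\<bar>Y l - \<mu> l\<bar> \<le> e * \<mu> l / 2" and c: "C l \<le> e * \<mu> l / 2" using G2 G3 that by auto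
    have "Y l - C l \<le> Z l" "Z l \<le> Y l" using ZY that(1) by auto
    moreover have "0 \<le> e * \<mu> l" using e mu_nn[of l] by simp
    ultimately have "\<bar>Z l - \<mu> l\<bar> \<le> e * \<mu> l" using abs_le_D1[OF a] abs_le_D2[OF a] c by (simp add: abs_le_iff)
    hence "\<bar>Z l - \<mu> l\<bar> * 2^l \<le> e * \<mu> l * 2^l" by (intro mult_right_mono) auto
    moreover have "\<bar>Z l - \<mu> l\<bar> * 2^l = \<bar>Z l * 2^l - real N\<bar>"
    proof -
      have "\<bar>Z l - \<mu> l\<bar> * 2^l = \<bar>(Z l - \<mu> l) * 2^l\<bar>" by (simp add: abs_mult)
      also have "(Z l - \<mu> l) * 2^l = Z l * 2^l - real N" using mu_mult[of l] by (simp add: left_diff_distrib)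
      finally show ?thesis .
    qed
    ultimately show ?thesis using mu_mult[of l] by (simp add: mult.assoc)
  qed
  have claimA: "\<exists>l1\<le>Lv. K \<le> Z l1 \<and> (\<forall>l\<le>Lv. 4*K \<le> \<mu> l \<longrightarrow> l < l1)" if N2: "2*K \<le> real N"
  proof -
    define S where "S = {l. l \<le> Lv \<and> 2*K \<le> \<mu> l}"
    have fS: "finite S" unfolding S_def by auto
    have "0 \<in> S" unfolding S_def \<mu>_def using N2 by simp
    hence neS: "S \<noteq> {}" by auto
    define l1 where "l1 = Max S"
    have l1S: "l1 \<in> S" unfolding l1_def using fS neS by (rule Max_in)
    have l1max: "l \<in> S \<Longrightarrow> l \<le> l1" for l unfolding l1_def using fS by simp
    have "\<mu> Lv < 1" unfolding \<mu>_def using NL by simp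
    hence "l1 \<noteq> Lv" using l1S K unfolding S_def by auto
    hence "Suc l1 \<le> Lv" using l1S unfolding S_def by auto
    hence "Suc l1 \<notin> S \<Longrightarrow> \<mu> (Suc l1) < 2*K" unfolding S_def by auto
    moreover have "Suc l1 \<notin> S" using l1max by fastforce
    ultimately have "\<mu> (Suc l1) < 2*K" by blast
    hence m4: "\<mu> l1 < 4*K" using mu_Suc[of l1] by simp
    have m2: "2*K \<le> \<mu> l1" and l1L: "l1 \<le> Lv" using l1S unfolding S_def by auto
    have a: "\<bar>Y l1 - \<mu> l1\<bar> \<le> e * \<mu> l1 / 2" and c: "C l1 \<le> e * \<mu> l1 / 2" using G2 G3 l1L m2 m4 K by auto
    have "Y l1 - C l1 \<le> Z l1" using ZY l1L by auto
    hence "(1 - e) * \<mu> l1 \<le> Z l1" using abs_le_D2[OF a] c by (simp add: algebra_simps)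
    moreover have "K \<le> (1 - e) * \<mu> l1"
    proof -
      have "(1/2) * (2*K) \<le> (1 - e) * \<mu> l1" using e m2 K by (intro mult_mono) auto
      thus ?thesis by simp
    qed
    ultimately have "K \<le> Z l1" by simp
    moreover have "\<forall>l\<le>Lv. 4*K \<le> \<mu> l \<longrightarrow> l < l1"
    proof (intro allI impI)
      fix l assume "l \<le> Lv" "4*K \<le> \<mu> l"
      show "l < l1"
      proof (rule ccontr)
        assume "\<not> l < l1"
        hence "\<mu> l \<le> \<mu> l1" using mu_mono by simp
        thus False using m4 \<open>4*K \<le> \<mu> l\<close> by simp
      qed
    qed
    ultimately show ?thesis using l1L by blast
  qed
  show ?thesis
  proof (cases "\<exists>l\<le>Lv. K \<le> Z l")
    case True
    define S where "S = {l. l \<le> Lv \<and> K \<le> Z l}"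
    have fS: "finite S" unfolding S_def by auto
    have neS: "S \<noteq> {}" using True unfolding S_def by auto
    have lh: "lhat Lv Z K = Max S" unfolding lhat_def S_def using True by simp
    define lh where "lh = Max S"
    have lhS: "lh \<in> S" unfolding lh_def using fS neS by (rule Max_in)
    have lhmax: "l \<in> S \<Longrightarrow> l \<le> lh" for l unfolding lh_def using fS by simp
    have lhL: "lh \<le> Lv" and ZK: "K \<le> Z lh" using lhS unfolding S_def by auto
    have "K \<le> Y lh" using ZK ZY[OF lhL] by auto
    hence m1: "K/2 \<le> \<mu> lh" using G1[OF lhL] by fastforce
    have m2: "\<mu> lh < 4*K"
    proof (rule ccontr)
      assume "\<not> \<mu> lh < 4*K"
      hence m: "4*K \<le> \<mu> lh" by simp
      moreover have "\<mu> lh \<le> \<mu> 0" using mu_mono by simp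
      ultimately have "2*K \<le> real N" using K unfolding \<mu>_def by simp
      then obtain l1 where "l1 \<le> Lv" "K \<le> Z l1" "\<forall>l\<le>Lv. 4*K \<le> \<mu> l \<longrightarrow> l < l1" using claimA by blast
      hence "l1 \<in> S" "lh < l1" using m lhL unfolding S_def by auto
      thus False using lhmax by fastforce
    qed
    show ?thesis unfolding lh lh_def[symmetric] using acc[OF lhL m1 m2] .
  next
    case False
    hence lh: "lhat Lv Z K = 0" unfolding lhat_def by (simp only: if_False)
    have N2: "real N < 2*K" using claimA False by force
    have "C 0 \<le> e * \<mu> 0 / 2" using G3[of 0] N2 K unfolding \<mu>_def by simp
    hence "C 0 \<le> e * real N / 2" unfolding \<mu>_def by simp
    moreover have "Y 0 - C 0 \<le> Z 0" "Z 0 \<le> Y 0" using ZY[of 0] by auto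
    moreover have "0 \<le> e * real N" using e by simp
    ultimately show ?thesis unfolding lh using Y0 by (simp add: abs_le_iff)
  qed
qed


definition Bk :: "nat \<Rightarrow> (nat\<Rightarrow>bool) set" where "Bk b = Pi\<^sub>E {..<b} (\<lambda>_. UNIV)"

lemma finite_Bk[simp]: "finite (Bk b)" unfolding Bk_def by (intro finite_PiE) auto

lemma card_Bk: "card (Bk b) = 2^b" unfolding Bk_def by (subst card_PiE) auto

lemma bkt_Bk: "bkt L b s i \<in> Bk b" unfolding bkt_def Bk_def by simp

definition tab :: "nat \<Rightarrow> nat \<Rightarrow> nat \<Rightarrow> (nat \<Rightarrow> (nat\<Rightarrow>bool) \<times> bool) \<Rightarrow> (nat \<Rightarrow> int) \<Rightarrow> (nat \<times> (nat\<Rightarrow>bool)) \<Rightarrow> int" where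
  "tab n L b s v = restrict (\<lambda>(l,\<beta>). \<Sum>i\<in>{1..n}. (if samp L s l i \<and> bkt L b s i = \<beta> then v i else 0)) ({..L} \<times> Bk b)"

definition Zc :: "nat \<Rightarrow> int \<Rightarrow> (nat \<times> (nat\<Rightarrow>bool) \<Rightarrow> int) \<Rightarrow> nat \<Rightarrow> nat" where
  "Zc b q t l = card {\<beta>\<in>Bk b. t (l,\<beta>) mod q \<noteq> 0}"

lemma tab_val: "l \<le> L \<Longrightarrow> \<beta> \<in> Bk b \<Longrightarrow>
  tab n L b s v (l,\<beta>) = (\<Sum>i\<in>{1..n}. (if samp L s l i \<and> bkt L b s i = \<beta> then v i else 0))"
  unfolding tab_def by simp

context
  fixes n L b l :: nat and s :: "nat \<Rightarrow> (nat\<Rightarrow>bool) \<times> bool" and v :: "nat \<Rightarrow> int" and q :: int and T :: "nat set"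
  assumes lL: "l \<le> L" and q: "q > 0" and Tdef: "T = {i\<in>{1..n}. \<not> q dvd v i}"
begin

lemma Z_le_Y: "Zc b q (tab n L b s v) l \<le> Ycnt L s l T"
proof -
  have "{\<beta>\<in>Bk b. tab n L b s v (l,\<beta>) mod q \<noteq> 0} \<subseteq> bkt L b s ` {i\<in>T. samp L s l i}"
  proof
    fix \<beta> assume h: "\<beta> \<in> {\<beta>\<in>Bk b. tab n L b s v (l,\<beta>) mod q \<noteq> 0}"
    hence \<beta>: "\<beta> \<in> Bk b" and nz: "\<not> q dvd tab n L b s v (l,\<beta>)" by (auto simp: dvd_eq_mod_eq_0)
    show "\<beta> \<in> bkt L b s ` {i\<in>T. samp L s l i}"
    proof (rule ccontr)
      assume nin: "\<beta> \<notin> bkt L b s ` {i\<in>T. samp L s l i}"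
      have "q dvd (\<Sum>i\<in>{1..n}. (if samp L s l i \<and> bkt L b s i = \<beta> then v i else 0))"
      proof (intro dvd_sum)
        fix i assume i: "i \<in> {1..n}"
        show "q dvd (if samp L s l i \<and> bkt L b s i = \<beta> then v i else 0)"
        proof (cases "samp L s l i \<and> bkt L b s i = \<beta>")
          case True
          hence "i \<notin> T" using nin by auto
          hence "q dvd v i" using i Tdef by auto
          thus ?thesis using True by simp
        qed auto
      qed
      thus False using nz tab_val[OF lL \<beta>] by simp
    qed
  qed
  hence "card {\<beta>\<in>Bk b. tab n L b s v (l,\<beta>) mod q \<noteq> 0} \<le> card (bkt L b s ` {i\<in>T. samp L s l i})"
    by (intro card_mono) (auto simp: Tdef)
  also have "\<dots> \<le> card {i\<in>T. samp L s l i}" by (rule card_image_le) (auto simp: Tdef)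
  finally show ?thesis unfolding Zc_def Ycnt_def .
qed

lemma Y_le_ZC: "Ycnt L s l T \<le> Zc b q (tab n L b s v) l + C2cnt L b s l T"
proof -
  define U where "U = {i\<in>T. samp L s l i \<and> (\<forall>k\<in>T. samp L s l k \<and> bkt L b s k = bkt L b s i \<longrightarrow> k = i)}"
  define YS where "YS = {i\<in>T. samp L s l i}"
  define P where "P = {p\<in>T\<times>T. fst p \<noteq> snd p \<and> samp L s l (fst p) \<and> samp L s l (snd p) \<and> bkt L b s (fst p) = bkt L b s (snd p)}"
  have fT: "finite T" unfolding Tdef by auto
  have UY: "U \<subseteq> YS" unfolding U_def YS_def by auto
  have inj: "inj_on (bkt L b s) U" unfolding U_def by (auto intro: inj_onI)
  have img: "bkt L b s ` U \<subseteq> {\<beta>\<in>Bk b. tab n L b s v (l,\<beta>) mod q \<noteq> 0}"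
  proof
    fix \<beta> assume "\<beta> \<in> bkt L b s ` U"
    then obtain i where iU: "i \<in> U" and \<beta>: "\<beta> = bkt L b s i" by auto
    have iT: "i \<in> T" and si: "samp L s l i" and iso: "\<And>k. k \<in> T \<Longrightarrow> samp L s l k \<Longrightarrow> bkt L b s k = \<beta> \<Longrightarrow> k = i"
      using iU \<beta> unfolding U_def by auto
    have i1n: "i \<in> {1..n}" and ndv: "\<not> q dvd v i" using iT Tdef by auto
    have tv: "tab n L b s v (l,\<beta>) = (\<Sum>k\<in>{1..n}. (if samp L s l k \<and> bkt L b s k = \<beta> then v k else 0))"
      using tab_val[OF lL] \<beta> bkt_Bk by simp
    also have "\<dots> = v i + (\<Sum>k\<in>{1..n}-{i}. (if samp L s l k \<and> bkt L b s k = \<beta> then v k else 0))"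
      using i1n si \<beta> by (simp add: sum.remove)
    finally have tv2: "tab n L b s v (l,\<beta>) = v i + (\<Sum>k\<in>{1..n}-{i}. (if samp L s l k \<and> bkt L b s k = \<beta> then v k else 0))" .
    have "q dvd (\<Sum>k\<in>{1..n}-{i}. (if samp L s l k \<and> bkt L b s k = \<beta> then v k else 0))"
    proof (intro dvd_sum)
      fix k assume k: "k \<in> {1..n}-{i}"
      show "q dvd (if samp L s l k \<and> bkt L b s k = \<beta> then v k else 0)"
      proof (cases "samp L s l k \<and> bkt L b s k = \<beta>")
        case True
        hence "k \<notin> T" using iso k by auto
        hence "q dvd v k" using k Tdef by auto
        thus ?thesis using True by simp
      qed auto
    qed
    hence "\<not> q dvd tab n L b s v (l,\<beta>)" using ndv tv2 by (simp add: dvd_add_left_iff)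
    thus "\<beta> \<in> {\<beta>\<in>Bk b. tab n L b s v (l,\<beta>) mod q \<noteq> 0}" using \<beta> bkt_Bk by (auto simp: dvd_eq_mod_eq_0)
  qed
  have cU: "card U \<le> Zc b q (tab n L b s v) l"
    unfolding Zc_def using card_inj_on_le[OF inj img] by simp
  have "YS - U \<subseteq> fst ` P"
  proof
    fix i assume i: "i \<in> YS - U"
    then obtain k where "k \<in> T" "samp L s l k" "bkt L b s k = bkt L b s i" "k \<noteq> i"
      unfolding U_def YS_def by auto
    hence "(i,k) \<in> P" using i unfolding P_def YS_def by auto
    thus "i \<in> fst ` P" by force
  qed
  hence "card (YS - U) \<le> card (fst ` P)" by (intro card_mono) (auto simp: P_def fT)
  also have "\<dots> \<le> card P" by (rule card_image_le) (auto simp: P_def fT)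
  finally have cD: "card (YS - U) \<le> card P" .
  have fYS: "finite YS" unfolding YS_def using fT by simp
  have fU: "finite U" using finite_subset[OF UY fYS] .
  have "card (YS - U) = card YS - card U" by (rule card_Diff_subset[OF fU UY])
  moreover have "card U \<le> card YS" by (rule card_mono[OF fYS UY])
  ultimately have "card YS = card U + card (YS - U)" by simp
  thus ?thesis using cU cD unfolding Ycnt_def C2cnt_def YS_def[symmetric] P_def[symmetric] by linarith
qed

end


lemma bad_bound:
  fixes L b l :: nat and T :: "nat set" and K e :: real
  assumes lL: "l \<le> L" and fT: "finite T" and TL: "T \<subseteq> {..<2^L}" and e: "e > 0" and K: "K > 0"
  defines "\<mu> \<equiv> real (card T) / 2^l"
  shows "real (card {s\<in>Seeds L (L+b). \<not> ((\<mu> < K/2 \<longrightarrow> real (Ycnt L s l T) < K)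
            \<and> (K/2 \<le> \<mu> \<and> \<mu> < 4*K \<longrightarrow> \<bar>real (Ycnt L s l T) - \<mu>\<bar> \<le> e*\<mu>/2)
            \<and> (\<mu> < 4*K \<longrightarrow> real (C2cnt L b s l T) \<le> e*\<mu>/2))})
     \<le> real (card (Seeds L (L+b))) * (2/K + 8/(e^2*K) + 8*K/(e*2^b))"
proof -
  let ?S = "Seeds L (L+b)"
  let ?Y = "\<lambda>s. real (Ycnt L s l T)" and ?C = "\<lambda>s. real (C2cnt L b s l T)"
  define A where "A = {s\<in>?S. \<mu> < K/2 \<and> K \<le> ?Y s}"
  define B where "B = {s\<in>?S. K/2 \<le> \<mu> \<and> \<mu> < 4*K \<and> e*\<mu>/2 < \<bar>?Y s - \<mu>\<bar>}"
  define Cs where "Cs = {s\<in>?S. \<mu> < 4*K \<and> e*\<mu>/2 < ?C s}"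
  have fS: "finite ?S" by simp
  have mu_nn: "0 \<le> \<mu>" unfolding \<mu>_def by simp
  have var: "(\<Sum>s\<in>?S. (?Y s - \<mu>)^2) \<le> real (card ?S) * \<mu>"
    unfolding \<mu>_def by (rule varY[OF lL fT TL])
  have sC: "(\<Sum>s\<in>?S. ?C s) \<le> real (card ?S) * \<mu>^2 / 2^b"
    unfolding \<mu>_def by (rule sumC2[OF lL fT TL])
  have cA: "real (card A) \<le> real (card ?S) * (2/K)"
  proof (cases "\<mu> < K/2")
    case True
    have "A \<subseteq> {s\<in>?S. K/2 \<le> \<bar>?Y s - \<mu>\<bar>}" unfolding A_def using True by auto
    hence "real (card A) \<le> real (card {s\<in>?S. K/2 \<le> \<bar>?Y s - \<mu>\<bar>})" by (intro of_nat_mono card_mono) auto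
    hence "real (card A) * (K/2)^2 \<le> real (card {s\<in>?S. K/2 \<le> \<bar>?Y s - \<mu>\<bar>}) * (K/2)^2"
      by (intro mult_right_mono) auto
    also have "\<dots> \<le> (\<Sum>s\<in>?S. (?Y s - \<mu>)^2)" by (rule chebyshev_count[OF fS]) (use K in auto)
    also have "\<dots> \<le> real (card ?S) * \<mu>" by (rule var)
    also have "\<dots> \<le> real (card ?S) * (K/2)" using True by (intro mult_left_mono) auto
    finally have "real (card A) * (K/2)^2 \<le> real (card ?S) * (K/2)" .
    hence "real (card A) * (K/2) \<le> real (card ?S)" using K by (simp add: power2_eq_square) (metis mult.commute)
    thus ?thesis using K by (simp add: field_simps)
  next
    case False thus ?thesis unfolding A_def using K by simp
  qed
  have cB: "real (card B) \<le> real (card ?S) * (8/(e^2*K))"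
  proof (cases "K/2 \<le> \<mu>")
    case True
    hence mpos: "\<mu> > 0" using K by simp
    have t: "e*\<mu>/2 > 0" using e mpos by simp
    have "B \<subseteq> {s\<in>?S. e*\<mu>/2 \<le> \<bar>?Y s - \<mu>\<bar>}" unfolding B_def by auto
    hence "real (card B) \<le> real (card {s\<in>?S. e*\<mu>/2 \<le> \<bar>?Y s - \<mu>\<bar>})" by (intro of_nat_mono card_mono) auto
    hence "real (card B) * (e*\<mu>/2)^2 \<le> real (card {s\<in>?S. e*\<mu>/2 \<le> \<bar>?Y s - \<mu>\<bar>}) * (e*\<mu>/2)^2"
      using t by (intro mult_right_mono) auto
    also have "\<dots> \<le> (\<Sum>s\<in>?S. (?Y s - \<mu>)^2)" by (rule chebyshev_count[OF fS t])
    also have "\<dots> \<le> real (card ?S) * \<mu>" by (rule var)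
    finally have h: "real (card B) * (e*\<mu>/2)^2 \<le> real (card ?S) * \<mu>" .
    have "real (card B) \<le> real (card ?S) * (4/(e^2*\<mu>))"
    proof -
      have "real (card B) * (e^2*\<mu>) \<le> real (card ?S) * 4"
        using h mpos by (simp add: power2_eq_square field_simps)
      thus ?thesis using e mpos by (simp add: field_simps)
    qed
    also have "4/(e^2*\<mu>) \<le> 8/(e^2*K)"
    proof -
      have "4*(e^2*K) \<le> 8*(e^2*\<mu>)" using True e by (simp add: field_simps)
      thus ?thesis using e K mpos by (simp add: field_simps)
    qed
    hence "real (card ?S) * (4/(e^2*\<mu>)) \<le> real (card ?S) * (8/(e^2*K))" by (intro mult_left_mono) auto
    finally show ?thesis .
  next
    case False thus ?thesis unfolding B_def using e K by simp
  qed
  have cC: "real (card Cs) \<le> real (card ?S) * (8*K/(e*2^b))"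
  proof (cases "\<mu> < 4*K \<and> \<mu> > 0")
    case True
    hence mpos: "\<mu> > 0" by simp
    have t: "e*\<mu>/2 > 0" using e mpos by simp
    have "Cs \<subseteq> {s\<in>?S. e*\<mu>/2 < ?C s}" unfolding Cs_def by auto
    hence "real (card Cs) \<le> real (card {s\<in>?S. e*\<mu>/2 < ?C s})" by (intro of_nat_mono card_mono) auto
    hence "real (card Cs) * (e*\<mu>/2) \<le> real (card {s\<in>?S. e*\<mu>/2 < ?C s}) * (e*\<mu>/2)"
      using t by (intro mult_right_mono) auto
    also have "\<dots> \<le> (\<Sum>s\<in>?S. ?C s)" by (rule markov_count[OF fS t]) simp
    also have "\<dots> \<le> real (card ?S) * \<mu>^2 / 2^b" by (rule sC)
    finally have h: "real (card Cs) * (e*\<mu>/2) \<le> real (card ?S) * \<mu>^2 / 2^b" .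
    have "real (card Cs) \<le> real (card ?S) * (2*\<mu>/(e*2^b))"
    proof -
      have "real (card Cs) * e * 2^b \<le> real (card ?S) * 2 * \<mu>"
        using h mpos by (simp add: power2_eq_square field_simps)
      thus ?thesis using e by (simp add: field_simps)
    qed
    also have "\<dots> \<le> real (card ?S) * (8*K/(e*2^b))"
      using True e by (intro mult_left_mono divide_right_mono) auto
    finally show ?thesis .
  next
    case False
    hence "Cs = {}"
    proof (cases "\<mu> = 0")
      case True
      hence "card T = 0" unfolding \<mu>_def by simp
      hence "T = {}" using fT by simp
      thus ?thesis unfolding Cs_def C2cnt_def using True by simp
    next
      case False
      thus ?thesis using \<open>\<not> (\<mu> < 4*K \<and> \<mu> > 0)\<close> mu_nn unfolding Cs_def by auto
    qed
    thus ?thesis using e K by simp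
  qed
  have "{s\<in>?S. \<not> ((\<mu> < K/2 \<longrightarrow> ?Y s < K)
            \<and> (K/2 \<le> \<mu> \<and> \<mu> < 4*K \<longrightarrow> \<bar>?Y s - \<mu>\<bar> \<le> e*\<mu>/2)
            \<and> (\<mu> < 4*K \<longrightarrow> ?C s \<le> e*\<mu>/2))} \<subseteq> A \<union> B \<union> Cs"
    unfolding A_def B_def Cs_def by auto
  hence "card {s\<in>?S. \<not> ((\<mu> < K/2 \<longrightarrow> ?Y s < K)
            \<and> (K/2 \<le> \<mu> \<and> \<mu> < 4*K \<longrightarrow> \<bar>?Y s - \<mu>\<bar> \<le> e*\<mu>/2)
            \<and> (\<mu> < 4*K \<longrightarrow> ?C s \<le> e*\<mu>/2))} \<le> card (A \<union> B \<union> Cs)"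
    by (intro card_mono) (auto simp: A_def B_def Cs_def)
  also have "\<dots> \<le> card A + card B + card Cs" by (meson card_Un_le add_right_mono order_trans)
  finally have "real (card {s\<in>?S. \<not> ((\<mu> < K/2 \<longrightarrow> ?Y s < K)
            \<and> (K/2 \<le> \<mu> \<and> \<mu> < 4*K \<longrightarrow> \<bar>?Y s - \<mu>\<bar> \<le> e*\<mu>/2)
            \<and> (\<mu> < 4*K \<longrightarrow> ?C s \<le> e*\<mu>/2))}) \<le> real (card A) + real (card B) + real (card Cs)"
    by linarith
  also have "\<dots> \<le> real (card ?S) * (2/K + 8/(e^2*K) + 8*K/(e*2^b))"
    using cA cB cC by (simp add: algebra_simps)
  finally show ?thesis .
qed


lemma freq_Nil: "freq [] = (\<lambda>_. 0)" unfolding freq_def by auto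

lemma freq_snoc: "freq (D @ [x]) i = freq D i + (if fst x = i then snd x else 0)"
  unfolding freq_def by simp

definition pbounded :: "nat \<Rightarrow> stream \<Rightarrow> bool" where
  "pbounded M D \<longleftrightarrow> (\<forall>k\<le>length D. \<forall>i. \<bar>freq (take k D) i\<bar> \<le> int M)"

lemma pbounded_butlast: "pbounded M (D @ [x]) \<Longrightarrow> pbounded M D"
  unfolding pbounded_def
proof (intro allI impI)
  fix k i assume h: "\<forall>k\<le>length (D @ [x]). \<forall>i. \<bar>freq (take k (D @ [x])) i\<bar> \<le> int M" and k: "k \<le> length D"
  have "take k (D @ [x]) = take k D" using k by simp
  thus "\<bar>freq (take k D) i\<bar> \<le> int M" using h k by (metis le_SucI length_append_singleton)
qed

lemma pbounded_take: "pbounded M D \<Longrightarrow> pbounded M (take k D)"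
  unfolding pbounded_def by (auto simp: min_def)

lemma pbounded_freq: "pbounded M D \<Longrightarrow> \<bar>freq D i\<bar> \<le> int M"
  unfolding pbounded_def by (metis order_refl take_all)

lemma sketch_alg:
  fixes S :: "'s set" and sk :: "'s \<Rightarrow> (nat\<Rightarrow>int) \<Rightarrow> 't" and up :: "'s \<Rightarrow> 't \<Rightarrow> nat\<times>int \<Rightarrow> 't"
    and est :: "'s \<Rightarrow> 't \<Rightarrow> real" and Bd :: "('s \<times> 't) set"
  assumes fin: "finite S" and ne: "S \<noteq> {}" and fB: "finite Bd" and cB: "card Bd \<le> 2^W"
    and upd: "\<And>s D x. s \<in> S \<Longrightarrow> sk s (freq (D@[x])) = up s (sk s (freq D)) x"
    and bd: "\<And>s v. s \<in> S \<Longrightarrow> (\<forall>i. \<bar>v i\<bar> \<le> int M) \<Longrightarrow> (s, sk s v) \<in> Bd"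
  shows "\<exists>A. \<forall>D. valid_stream n M D \<longrightarrow>
     (\<forall>k\<le>length D. \<forall>st\<in>set_pmf (run A (take k D)). length st = W) \<and>
     alg_output A D = map_pmf (\<lambda>s. est s (sk s (freq D))) (pmf_of_set S)"
proof -
  have fL: "finite {xs::bool list. set xs \<subseteq> UNIV \<and> length xs = W}"
    using finite_lists_length_eq[of "UNIV::bool set" W] by simp
  have cL: "card {xs::bool list. set xs \<subseteq> UNIV \<and> length xs = W} = 2^W"
    using card_lists_length_eq[of "UNIV::bool set" W] by (simp add: card_UNIV_bool)
  obtain enc :: "'s \<times> 't \<Rightarrow> bool list" where encB: "enc ` Bd \<subseteq> {xs. set xs \<subseteq> UNIV \<and> length xs = W}" and inj: "inj_on enc Bd"
    using card_le_inj[OF fB fL] cB cL by auto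
  define dec where "dec = the_inv_into Bd enc"
  have dec_enc: "a \<in> Bd \<Longrightarrow> dec (enc a) = a" for a unfolding dec_def by (rule the_inv_into_f_f[OF inj])
  have len: "a \<in> Bd \<Longrightarrow> length (enc a) = W" for a using encB by auto
  define P where "P = pmf_of_set S"
  have setP: "set_pmf P = S" unfolding P_def using fin ne by simp
  define A where "A = Alg (map_pmf (\<lambda>s. enc (s, sk s (\<lambda>_. 0))) P)
      (\<lambda>x u. return_pmf (enc (fst (dec x), up (fst (dec x)) (snd (dec x)) u)))
      (\<lambda>x. return_pmf (est (fst (dec x)) (snd (dec x))))"
  have runD: "pbounded M D \<Longrightarrow> run A D = map_pmf (\<lambda>s. enc (s, sk s (freq D))) P" for D
  proof (induction D rule: rev_induct)
    case Nil thus ?case unfolding A_def by (simp add: freq_Nil)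
  next
    case (snoc x D)
    have pD: "pbounded M D" using pbounded_butlast[OF snoc.prems] .
    have IH: "run A D = map_pmf (\<lambda>s. enc (s, sk s (freq D))) P" using snoc.IH[OF pD] .
    have r1: "run A (D @ [x]) = bind_pmf (run A D) (\<lambda>st. return_pmf (enc (fst (dec st), up (fst (dec st)) (snd (dec st)) x)))"
      unfolding A_def by simp
    have key: "\<And>s. s \<in> S \<Longrightarrow> dec (enc (s, sk s (freq D))) = (s, sk s (freq D))"
      using bd pbounded_freq[OF pD] dec_enc by blast
    have "bind_pmf (run A D) (\<lambda>st. return_pmf (enc (fst (dec st), up (fst (dec st)) (snd (dec st)) x)))
       = bind_pmf P (\<lambda>s. return_pmf (enc (s, sk s (freq (D @ [x])))))"
      unfolding IH bind_map_pmf by (intro bind_pmf_cong refl) (simp add: key upd setP)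
    also have "bind_pmf P (\<lambda>s. return_pmf (enc (s, sk s (freq (D @ [x]))))) = map_pmf (\<lambda>s. enc (s, sk s (freq (D @ [x])))) P"
      by (simp add: map_pmf_def)
    finally have "bind_pmf (run A D) (\<lambda>st. return_pmf (enc (fst (dec st), up (fst (dec st)) (snd (dec st)) x)))
       = map_pmf (\<lambda>s. enc (s, sk s (freq (D @ [x])))) P" .
    with r1 show ?case by (rule trans)
  qed
  have "\<forall>D. valid_stream n M D \<longrightarrow>
     (\<forall>k\<le>length D. \<forall>st\<in>set_pmf (run A (take k D)). length st = W) \<and>
     alg_output A D = map_pmf (\<lambda>s. est s (sk s (freq D))) (pmf_of_set S)"
  proof (intro allI impI)
    fix D assume v: "valid_stream n M D"
    hence pD: "pbounded M D" unfolding valid_stream_def pbounded_def by blast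
    have c1: "\<forall>k\<le>length D. \<forall>st\<in>set_pmf (run A (take k D)). length st = W"
    proof -
      have "length st = W" if kD: "k \<le> length D" and stin: "st \<in> set_pmf (run A (take k D))" for k st
      proof -
        have pk: "pbounded M (take k D)" by (rule pbounded_take[OF pD])
        from stin obtain s where s: "s \<in> S" and st: "st = enc (s, sk s (freq (take k D)))"
          unfolding runD[OF pk] using setP by auto
        have "(s, sk s (freq (take k D))) \<in> Bd" using bd[OF s] pbounded_freq[OF pk] by auto
        thus "length st = W" using st len by simp
      qed
      thus ?thesis by blast
    qed
    have key: "\<And>s. s \<in> S \<Longrightarrow> dec (enc (s, sk s (freq D))) = (s, sk s (freq D))"
      using bd pbounded_freq[OF pD] dec_enc by blast
    have "alg_output A D = bind_pmf (run A D) (\<lambda>x. return_pmf (est (fst (dec x)) (snd (dec x))))"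
      unfolding A_def by simp
    also have "\<dots> = bind_pmf P (\<lambda>s. return_pmf (est s (sk s (freq D))))"
      unfolding runD[OF pD] bind_map_pmf by (intro bind_pmf_cong refl) (simp add: key setP)
    also have "\<dots> = map_pmf (\<lambda>s. est s (sk s (freq D))) (pmf_of_set S)" unfolding P_def by (simp add: map_pmf_def)
    finally have c2: "alg_output A D = map_pmf (\<lambda>s. est s (sk s (freq D))) (pmf_of_set S)" .
    from c1 c2 show "(\<forall>k\<le>length D. \<forall>st\<in>set_pmf (run A (take k D)). length st = W) \<and>
     alg_output A D = map_pmf (\<lambda>s. est s (sk s (freq D))) (pmf_of_set S)" by blast
  qed
  thus ?thesis by blast
qed


lemma low_bit_props:
  assumes m: "m > 0"
  shows "\<And>t. (2::nat)^t dvd m \<longleftrightarrow> t \<le> low_bit m"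
proof -
  have ex: "\<exists>j. odd (m div 2^j)"
  proof (rule ccontr)
    assume "\<not> ?thesis"
    hence ev: "\<And>j. even (m div 2^j)" by auto
    have "(2::nat)^j dvd m" for j
    proof (induction j)
      case 0 thus ?case by simp
    next
      case (Suc j)
      from ev[of j] obtain c where c: "m div 2^j = 2 * c" by blast
      have "m = 2^j * (m div 2^j)" using Suc by simp
      hence "m = 2^j * (2*c)" unfolding c .
      thus ?case by (simp add: mult.assoc)
    qed
    hence "2^m \<le> m" using m by (intro dvd_imp_le) auto
    moreover have "m < 2^m" by (rule less_exp)
    ultimately show False by simp
  qed
  let ?k = "low_bit m"
  have odd_k: "odd (m div 2^?k)" unfolding low_bit_def by (rule LeastI_ex[OF ex])
  have ev_lt: "j < ?k \<Longrightarrow> even (m div 2^j)" for j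
    unfolding low_bit_def using not_less_Least[of j "\<lambda>j. odd (m div 2^j)"] by blast
  have dv: "t \<le> ?k \<Longrightarrow> (2::nat)^t dvd m" for t
  proof (induction t)
    case 0 thus ?case by simp
  next
    case (Suc t)
    hence "t < ?k" by simp
    from ev_lt[OF this] obtain c where c: "m div 2^t = 2 * c" by blast
    have "2^t dvd m" using Suc by simp
    hence "m = 2^t * (m div 2^t)" by simp
    hence "m = 2^t * (2*c)" unfolding c .
    thus ?case by (simp add: mult.assoc)
  qed
  have ndv: "\<not> (2::nat)^(Suc ?k) dvd m"
  proof
    assume "(2::nat)^(Suc ?k) dvd m"
    then obtain c where "m = 2^(Suc ?k) * c" by blast
    hence "m = 2^?k * (2 * c)" by (simp add: mult_ac)
    hence "m div 2^?k = (2^?k * (2 * c)) div 2^?k" by (rule arg_cong)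
    also have "\<dots> = 2 * c" by simp
    finally have "m div 2^?k = 2 * c" .
    thus False using odd_k by simp
  qed
  show "(2::nat)^t dvd m \<longleftrightarrow> t \<le> ?k" for t
  proof
    assume h: "2^t dvd m"
    show "t \<le> ?k"
    proof (rule ccontr)
      assume "\<not> t \<le> ?k"
      hence "(2::nat)^(Suc ?k) dvd 2^t" by (intro le_imp_power_dvd) simp
      thus False using h ndv dvd_trans by blast
    qed
  qed (rule dv)
qed

lemma geo_tail:
  "k \<le> J \<Longrightarrow> (\<Sum>j<J. if k \<le> j then 1/2^(j+1) else 0) + 1/2^J = (1/2^k :: real)"
proof (induction J)
  case 0 thus ?case by simp
next
  case (Suc J)
  show ?case
  proof (cases "k \<le> J")
    case True
    have "(\<Sum>j<Suc J. if k \<le> j then 1/2^(j+1) else 0) + 1/2^(Suc J)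
        = ((\<Sum>j<J. if k \<le> j then 1/2^(j+1) else 0) + 1/2^J) + (1/2^(J+1) + 1/2^(J+1) - 1/2^J :: real)"
      using True by simp
    also have "(1/2^(J+1) + 1/2^(J+1) - 1/2^J :: real) = 0" by simp
    finally show ?thesis using Suc.IH[OF True] by simp
  next
    case False
    hence k: "k = Suc J" using Suc.prems by simp
    have "(\<Sum>j<Suc J. if k \<le> j then 1/2^(j+1) else (0::real)) = 0" using k by (intro sum.neutral) auto
    thus ?thesis using k by simp
  qed
qed

lemma gnp_coord:
  fixes x :: int
  assumes "\<bar>x\<bar> < 2^J"
  shows "g_np (nat \<bar>x\<bar>) = (\<Sum>j<J. of_bool (\<not> 2^(j+1) dvd x) / 2^(j+1)) + of_bool (\<not> 2^(J+1) dvd x) / 2^J"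
proof (cases "x = 0")
  case True thus ?thesis by (simp add: g_np_def)
next
  case False
  define m where "m = nat \<bar>x\<bar>"
  have m: "m > 0" using False unfolding m_def by simp
  have "int m < int (2^J)" using assms unfolding m_def by simp
  hence mJ: "m < 2^J" by (simp only: of_nat_less_iff)
  have dvdx: "(2::int)^t dvd x \<longleftrightarrow> (2::nat)^t dvd m" for t
  proof -
    have "(2::int)^t dvd x \<longleftrightarrow> (2::int)^t dvd \<bar>x\<bar>" by simp
    also have "\<bar>x\<bar> = int m" unfolding m_def by simp
    also have "(2::int)^t dvd int m \<longleftrightarrow> (2::nat)^t dvd m" by (metis of_nat_dvd_iff of_nat_numeral of_nat_power)
    finally show ?thesis .
  qed
  define k where "k = low_bit m"
  have lb: "(2::nat)^t dvd m \<longleftrightarrow> t \<le> k" for t unfolding k_def by (rule low_bit_props[OF m])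
  have kJ: "k < J"
  proof -
    have "(2::nat)^k dvd m" using lb by simp
    hence "2^k \<le> m" using m by (intro dvd_imp_le) auto
    hence "(2::nat)^k < 2^J" using mJ by (rule le_less_trans)
    thus ?thesis by simp
  qed
  have "(\<Sum>j<J. of_bool (\<not> 2^(j+1) dvd x) / 2^(j+1)) + of_bool (\<not> 2^(J+1) dvd x) / (2::real)^J
      = (\<Sum>j<J. if k \<le> j then 1/2^(j+1) else 0) + 1/2^J"
  proof -
    have dx: "\<And>t. (2::int)^t dvd x \<longleftrightarrow> t \<le> k" using dvdx lb by simp
    show ?thesis using kJ by (intro arg_cong2[where f="(+)"] sum.cong refl) (simp_all only: dx, auto)
  qed
  also have "\<dots> = 1/2^k" using kJ by (intro geo_tail) simp
  also have "\<dots> = g_np (nat \<bar>x\<bar>)" unfolding g_np_def k_def m_def[symmetric] using m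
    by (simp add: powr_minus powr_realpow divide_inverse)
  finally show ?thesis by simp
qed

lemma gsum_decomp:
  fixes v :: "nat \<Rightarrow> int"
  assumes "\<And>i. i \<in> {1..n} \<Longrightarrow> \<bar>v i\<bar> < 2^J"
  shows "gsum g_np n v = (\<Sum>j<J. real (card {i\<in>{1..n}. \<not> 2^(j+1) dvd v i}) / 2^(j+1))
            + real (card {i\<in>{1..n}. \<not> 2^(J+1) dvd v i}) / 2^J"
proof -
  have cf: "real (card {i\<in>{1..n}. P i}) = (\<Sum>i\<in>{1..n}. of_bool (P i))" for P :: "nat \<Rightarrow> bool"
    by (simp add: sum_of_bool_eq Int_def conj_commute)
  have "gsum g_np n v = (\<Sum>i\<in>{1..n}. (\<Sum>j<J. of_bool (\<not> 2^(j+1) dvd v i) / 2^(j+1)) + of_bool (\<not> 2^(J+1) dvd v i) / 2^J)"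
    unfolding gsum_def by (intro sum.cong refl gnp_coord assms) auto
  also have "\<dots> = (\<Sum>i\<in>{1..n}. \<Sum>j<J. of_bool (\<not> 2^(j+1) dvd v i) / 2^(j+1)) + (\<Sum>i\<in>{1..n}. of_bool (\<not> 2^(J+1) dvd v i) / 2^J)"
    by (rule sum.distrib)
  also have "(\<Sum>i\<in>{1..n}. \<Sum>j<J. of_bool (\<not> 2^(j+1) dvd v i) / (2::real)^(j+1)) = (\<Sum>j<J. \<Sum>i\<in>{1..n}. of_bool (\<not> 2^(j+1) dvd v i) / 2^(j+1))"
    by (rule sum.swap)
  also have "\<dots> = (\<Sum>j<J. real (card {i\<in>{1..n}. \<not> 2^(j+1) dvd v i}) / 2^(j+1))"
    by (intro sum.cong refl) (simp only: cf sum_divide_distrib)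
  also have "(\<Sum>i\<in>{1..n}. of_bool (\<not> 2^(J+1) dvd v i) / (2::real)^J) = real (card {i\<in>{1..n}. \<not> 2^(J+1) dvd v i}) / 2^J"
    by (simp only: cf sum_divide_distrib)
  finally show ?thesis .
qed


definition upd :: "nat \<Rightarrow> nat \<Rightarrow> nat \<Rightarrow> (nat \<Rightarrow> (nat\<Rightarrow>bool) \<times> bool) \<Rightarrow> (nat \<times> (nat\<Rightarrow>bool) \<Rightarrow> int) \<Rightarrow> nat \<times> int \<Rightarrow> (nat \<times> (nat\<Rightarrow>bool) \<Rightarrow> int)" where
  "upd n L b s t u = restrict (\<lambda>(l,\<beta>). t (l,\<beta>) + (if fst u \<in> {1..n} \<and> samp L s l (fst u) \<and> bkt L b s (fst u) = \<beta> then snd u else 0)) ({..L} \<times> Bk b)"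

lemma sum_if_delta:
  assumes "finite A"
  shows "(\<Sum>i\<in>A. (if c i then f i + (if a = i then d else 0) else 0)) = (\<Sum>i\<in>A. (if c i then f i else 0)) + (if a \<in> A \<and> c a then d else (0::int))"
proof -
  have "(\<Sum>i\<in>A. (if c i then f i + (if a = i then d else 0) else 0)) = (\<Sum>i\<in>A. (if c i then f i else 0) + (if a = i then (if c a then d else 0) else 0))"
    by (intro sum.cong refl) auto
  also have "\<dots> = (\<Sum>i\<in>A. (if c i then f i else 0)) + (\<Sum>i\<in>A. (if a = i then (if c a then d else 0) else 0))"
    by (rule sum.distrib)
  also have "(\<Sum>i\<in>A. (if a = i then (if c a then d else 0) else 0)) = (if a \<in> A then (if c a then d else 0) else 0)"
    using assms by (rule sum.delta')
  finally show ?thesis by simp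
qed

lemma card_sym_int: "card {- int N..int N} = 2*N+1"
  by (simp add: card_atLeastAtMost_int; presburger)

lemma tab_update: "tab n L b s (freq (D @ [x])) = upd n L b s (tab n L b s (freq D)) x"
  unfolding tab_def upd_def
proof (rule restrict_ext)
  fix p assume p: "p \<in> {..L} \<times> Bk b"
  obtain l \<beta> where pe: "p = (l, \<beta>)" by (cases p)
  show "(case p of (l, \<beta>) \<Rightarrow> \<Sum>i\<in>{1..n}. if samp L s l i \<and> bkt L b s i = \<beta> then freq (D @ [x]) i else 0) =
    (case p of (l, \<beta>) \<Rightarrow> restrict (\<lambda>(l, \<beta>). \<Sum>i\<in>{1..n}. if samp L s l i \<and> bkt L b s i = \<beta> then freq D i else 0) ({..L} \<times> Bk b) (l, \<beta>) +
       (if fst x \<in> {1..n} \<and> samp L s l (fst x) \<and> bkt L b s (fst x) = \<beta> then snd x else 0))"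
    using p unfolding pe freq_snoc by (simp add: sum_if_delta)
qed

lemma tab_bound:
  assumes "\<forall>i. \<bar>v i\<bar> \<le> int M"
  shows "tab n L b s v \<in> Pi\<^sub>E ({..L} \<times> Bk b) (\<lambda>_. {- int (n*M)..int (n*M)})"
proof -
  have "\<bar>\<Sum>i\<in>{1..n}. (if samp L s l i \<and> bkt L b s i = \<beta> then v i else 0)\<bar> \<le> int (n*M)" for l \<beta>
  proof -
    have "\<bar>\<Sum>i\<in>{1..n}. (if samp L s l i \<and> bkt L b s i = \<beta> then v i else 0)\<bar> \<le> (\<Sum>i\<in>{1..n}. \<bar>if samp L s l i \<and> bkt L b s i = \<beta> then v i else 0\<bar>)"
      by (rule sum_abs)
    also have "\<dots> \<le> (\<Sum>i\<in>{1..n}. int M)" using assms by (intro sum_mono) auto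
    finally have "\<bar>\<Sum>i\<in>{1..n}. (if samp L s l i \<and> bkt L b s i = \<beta> then v i else 0)\<bar> \<le> int (n*M)" by simp
    thus ?thesis .
  qed
  hence "(\<Sum>i\<in>{1..n}. (if samp L s l i \<and> bkt L b s i = \<beta> then v i else 0)) \<in> {- int (n*M)..int (n*M)}" for l \<beta>
    using abs_le_D1 abs_le_D2 by (metis atLeastAtMost_iff minus_le_iff)
  thus ?thesis unfolding tab_def by (auto simp: PiE_iff)
qed

lemma card_Bd:
  assumes "n * M < 2^L"
  shows "card (Seeds L (L+b) \<times> Pi\<^sub>E ({..L} \<times> Bk b) (\<lambda>_. {- int (n*M)..int (n*M)}))
       \<le> 2^((L+1)*(L+b) + (L+1)*2^b*(L+1))"
proof -
  have c1: "card (Pi\<^sub>E ({..L} \<times> Bk b) (\<lambda>_. {- int (n*M)..int (n*M)})) = (2*(n*M)+1)^((L+1)*2^b)"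
  proof -
    have "card {- int (n*M)..int (n*M)} = 2*(n*M)+1" by (rule card_sym_int)
    moreover have "card ({..L} \<times> Bk b) = (L+1)*2^b" by (simp add: card_cartesian_product card_Bk)
    ultimately show ?thesis by (simp add: card_PiE)
  qed
  have "2*(n*M)+1 \<le> 2^(L+1)" using assms by simp
  hence "(2*(n*M)+1)^((L+1)*2^b) \<le> (2^(L+1))^((L+1)*2^b)" by (rule power_mono) simp
  also have "\<dots> = 2^((L+1)*2^b*(L+1))" by (simp only: power_mult[symmetric] mult.commute)
  finally have "(2*(n*M)+1)^((L+1)*2^b) \<le> 2^((L+1)*2^b*(L+1))" .
  hence h: "card (Seeds L (L+b)) * (2*(n*M)+1)^((L+1)*2^b) \<le> 2^((L+1)*(L+b)) * 2^((L+1)*2^b*(L+1))"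
    by (simp only: card_Seeds mult_le_cancel1) simp
  have "card (Seeds L (L+b) \<times> Pi\<^sub>E ({..L} \<times> Bk b) (\<lambda>_. {- int (n*M)..int (n*M)}))
     = card (Seeds L (L+b)) * (2*(n*M)+1)^((L+1)*2^b)" by (simp only: card_cartesian_product c1)
  also have "\<dots> \<le> 2^((L+1)*(L+b)) * 2^((L+1)*2^b*(L+1))" by (rule h)
  also have "\<dots> = 2^((L+1)*(L+b) + (L+1)*2^b*(L+1))" by (simp only: power_add)
  finally show ?thesis .
qed


definition goodl :: "nat \<Rightarrow> nat \<Rightarrow> nat set \<Rightarrow> real \<Rightarrow> real \<Rightarrow> nat \<Rightarrow> (nat \<Rightarrow> (nat\<Rightarrow>bool) \<times> bool) \<Rightarrow> bool" where
  "goodl L b T e K l s = ((real (card T) / 2^l < K/2 \<longrightarrow> real (Ycnt L s l T) < K)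
            \<and> (K/2 \<le> real (card T) / 2^l \<and> real (card T) / 2^l < 4*K \<longrightarrow> \<bar>real (Ycnt L s l T) - real (card T) / 2^l\<bar> \<le> e*(real (card T) / 2^l)/2)
            \<and> (real (card T) / 2^l < 4*K \<longrightarrow> real (C2cnt L b s l T) \<le> e*(real (card T) / 2^l)/2))"

lemma bad_goodl:
  assumes "l \<le> L" "finite T" "T \<subseteq> {..<2^L}" "e > 0" "K > 0"
  shows "real (card {s\<in>Seeds L (L+b). \<not> goodl L b T e K l s}) \<le> real (card (Seeds L (L+b))) * (2/K + 8/(e^2*K) + 8*K/(e*2^b))"
  unfolding goodl_def using bad_bound[OF assms] by simp

definition Nh :: "nat \<Rightarrow> nat \<Rightarrow> real \<Rightarrow> (nat \<times> (nat\<Rightarrow>bool) \<Rightarrow> int) \<Rightarrow> nat \<Rightarrow> real" where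
  "Nh L b K t j = real (Zc b (2^(j+1)) t (lhat L (\<lambda>l. real (Zc b (2^(j+1)) t l)) K)) * 2^(lhat L (\<lambda>l. real (Zc b (2^(j+1)) t l)) K)"

definition est :: "nat \<Rightarrow> nat \<Rightarrow> real \<Rightarrow> (nat \<times> (nat\<Rightarrow>bool) \<Rightarrow> int) \<Rightarrow> real" where
  "est L b K t = (\<Sum>j<L. Nh L b K t j / 2^(j+1)) + Nh L b K t L / 2^L"

lemma Nh_accurate:
  fixes v :: "nat \<Rightarrow> int"
  assumes e: "0 < e" "e \<le> 1/2" and K: "1 \<le> K" and nL: "n < 2^L" and jL: "j \<le> L"
    and Tdef: "T = {i\<in>{1..n}. \<not> (2::int)^(j+1) dvd v i}"
    and good: "\<And>l. l \<le> L \<Longrightarrow> goodl L b T e K l s"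
  shows "\<bar>Nh L b K (tab n L b s v) j - real (card T)\<bar> \<le> e * real (card T)"
proof -
  let ?q = "(2::int)^(j+1)"
  let ?Z = "\<lambda>l. real (Zc b ?q (tab n L b s v) l)"
  let ?Y = "\<lambda>l. real (Ycnt L s l T)"
  let ?C = "\<lambda>l. real (C2cnt L b s l T)"
  have fT: "finite T" unfolding Tdef by simp
  have "card T \<le> card {1..n}" unfolding Tdef by (intro card_mono) auto
  hence "card T \<le> n" by simp
  hence NL: "real (card T) < 2^L" using nL
    by (metis of_nat_less_iff of_nat_numeral of_nat_power le_less_trans)
  have Y0: "?Y 0 = real (card T)" unfolding Ycnt_def by simp
  have ZY: "?Y l - ?C l \<le> ?Z l \<and> ?Z l \<le> ?Y l" if "l \<le> L" for l
  proof -
    have q: "?q > 0" by simp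
    have a: "Zc b ?q (tab n L b s v) l \<le> Ycnt L s l T" by (rule Z_le_Y[OF that q Tdef])
    have c: "Ycnt L s l T \<le> Zc b ?q (tab n L b s v) l + C2cnt L b s l T" by (rule Y_le_ZC[OF that q Tdef])
    show ?thesis using a c by (simp add: of_nat_add[symmetric] del: of_nat_add)
  qed
  have G: "goodl L b T e K l s" if "l \<le> L" for l using good that .
  have "\<bar>?Z (lhat L ?Z K) * 2^(lhat L ?Z K) - real (card T)\<bar> \<le> e * real (card T)"
  proof (rule est_det[where Y="\<lambda>l. real (Ycnt L s l T)" and C="\<lambda>l. real (C2cnt L b s l T)"
      and Z="\<lambda>l. real (Zc b ((2::int)^(j+1)) (tab n L b s v) l)" and N="card T" and Lv=L, OF e K NL Y0])
    show "\<And>l. l \<le> L \<Longrightarrow> ?Y l - ?C l \<le> ?Z l \<and> ?Z l \<le> ?Y l" using ZY .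
    show "\<And>l. l \<le> L \<Longrightarrow> real (card T) / 2^l < K/2 \<Longrightarrow> ?Y l < K"
      using G unfolding goodl_def by blast
    show "\<And>l. l \<le> L \<Longrightarrow> K/2 \<le> real (card T) / 2^l \<Longrightarrow> real (card T) / 2^l < 4*K \<Longrightarrow>
        \<bar>?Y l - real (card T) / 2^l\<bar> \<le> e * (real (card T) / 2^l) / 2"
      using G unfolding goodl_def by blast
    show "\<And>l. l \<le> L \<Longrightarrow> real (card T) / 2^l < 4*K \<Longrightarrow> ?C l \<le> e * (real (card T) / 2^l) / 2"
      using G unfolding goodl_def by blast
  qed
  thus ?thesis unfolding Nh_def .
qed

lemma est_accurate:
  fixes v :: "nat \<Rightarrow> int" and e :: real
  assumes vL: "\<And>i. i \<in> {1..n} \<Longrightarrow> \<bar>v i\<bar> < 2^L" and e: "0 \<le> e"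
    and acc: "\<And>j. j \<le> L \<Longrightarrow> \<bar>Nh L b K t j - real (card {i\<in>{1..n}. \<not> (2::int)^(j+1) dvd v i})\<bar>
                  \<le> e * real (card {i\<in>{1..n}. \<not> (2::int)^(j+1) dvd v i})"
  shows "\<bar>est L b K t - gsum g_np n v\<bar> \<le> e * gsum g_np n v"
proof -
  define N where "N = (\<lambda>j. real (card {i\<in>{1..n}. \<not> (2::int)^(j+1) dvd v i}))"
  define d where "d = (\<lambda>j. Nh L b K t j - N j)"
  have g: "gsum g_np n v = (\<Sum>j<L. N j / 2^(j+1)) + N L / 2^L"
    unfolding N_def by (rule gsum_decomp[OF vL])
  have dj: "j \<le> L \<Longrightarrow> \<bar>d j\<bar> \<le> e * N j" for j unfolding d_def N_def using acc by simp
  have "est L b K t - gsum g_np n v = (\<Sum>j<L. d j / 2^(j+1)) + d L / 2^L"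
    unfolding est_def g d_def by (simp add: sum_subtractf diff_divide_distrib)
  also have "\<bar>\<dots>\<bar> \<le> (\<Sum>j<L. \<bar>d j\<bar> / 2^(j+1)) + \<bar>d L\<bar> / 2^L"
  proof -
    have "\<bar>(\<Sum>j<L. d j / 2^(j+1)) + d L / 2^L\<bar> \<le> \<bar>\<Sum>j<L. d j / 2^(j+1)\<bar> + \<bar>d L / 2^L\<bar>" by (rule abs_triangle_ineq)
    also have "\<bar>\<Sum>j<L. d j / 2^(j+1)\<bar> \<le> (\<Sum>j<L. \<bar>d j / 2^(j+1)\<bar>)" by (rule sum_abs)
    finally show ?thesis by (simp add: abs_divide)
  qed
  also have "\<dots> \<le> (\<Sum>j<L. e * N j / 2^(j+1)) + e * N L / 2^L"
    using dj by (intro add_mono sum_mono divide_right_mono) auto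
  also have "\<dots> = e * gsum g_np n v" unfolding g by (simp add: sum_distrib_left algebra_simps)
  finally show ?thesis .
qed

lemma main_count:
  fixes v :: "nat \<Rightarrow> int" and e K :: real
  assumes e: "0 < e" "e \<le> 1/2" and K: "1 \<le> K" and n1: "1 \<le> n" and M1: "1 \<le> M" and nM: "n * M < 2^L"
    and vb: "\<forall>i. \<bar>v i\<bar> \<le> int M"
    and bound: "real ((L+1)^2) * (2/K + 8/(e^2*K) + 8*K/(e*2^b)) \<le> 1/3"
  shows "real (card {s\<in>Seeds L (L+b). \<not> (\<bar>est L b K (tab n L b s v) - gsum g_np n v\<bar> \<le> e * gsum g_np n v)})
     \<le> real (card (Seeds L (L+b))) / 3"
proof -
  let ?S = "Seeds L (L+b)"
  define T where "T = (\<lambda>j. {i\<in>{1..n}. \<not> (2::int)^(j+1) dvd v i})"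
  define Bad where "Bad = (\<lambda>p. {s\<in>?S. \<not> goodl L b (T (fst p)) e K (snd p) s})"
  have "n \<le> n * M" using M1 by simp
  hence nL: "n < 2^L" using nM by linarith
  have vL: "\<bar>v i\<bar> < 2^L" for i
  proof -
    have "M \<le> n * M" using n1 by simp
    hence "M < 2^L" using nM by linarith
    hence "int M < int (2^L)" by (simp only: of_nat_less_iff)
    hence "int M < 2^L" by simp
    thus ?thesis using vb le_less_trans by blast
  qed
  have sub: "{s\<in>?S. \<not> (\<bar>est L b K (tab n L b s v) - gsum g_np n v\<bar> \<le> e * gsum g_np n v)} \<subseteq> (\<Union>p\<in>{..L}\<times>{..L}. Bad p)"
  proof
    fix s assume s: "s \<in> {s\<in>?S. \<not> (\<bar>est L b K (tab n L b s v) - gsum g_np n v\<bar> \<le> e * gsum g_np n v)}"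
    show "s \<in> (\<Union>p\<in>{..L}\<times>{..L}. Bad p)"
    proof (rule ccontr)
      assume "s \<notin> (\<Union>p\<in>{..L}\<times>{..L}. Bad p)"
      hence good: "\<And>j l. j \<le> L \<Longrightarrow> l \<le> L \<Longrightarrow> goodl L b (T j) e K l s" using s unfolding Bad_def by auto
      have "\<bar>est L b K (tab n L b s v) - gsum g_np n v\<bar> \<le> e * gsum g_np n v"
      proof (rule est_accurate)
        show "\<And>i. i \<in> {1..n} \<Longrightarrow> \<bar>v i\<bar> < 2^L" using vL by simp
        show "0 \<le> e" using e by simp
        fix j assume j: "j \<le> L"
        show "\<bar>Nh L b K (tab n L b s v) j - real (card {i\<in>{1..n}. \<not> (2::int)^(j+1) dvd v i})\<bar>
                  \<le> e * real (card {i\<in>{1..n}. \<not> (2::int)^(j+1) dvd v i})"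
          using Nh_accurate[OF e K nL j, of "T j" v b s] good[OF j] unfolding T_def by blast
      qed
      thus False using s by simp
    qed
  qed
  have fin: "finite ({..L}\<times>{..L})" by simp
  have "card {s\<in>?S. \<not> (\<bar>est L b K (tab n L b s v) - gsum g_np n v\<bar> \<le> e * gsum g_np n v)} \<le> card (\<Union>p\<in>{..L}\<times>{..L}. Bad p)"
    using sub by (intro card_mono) (auto simp: Bad_def)
  also have "\<dots> \<le> (\<Sum>p\<in>{..L}\<times>{..L}. card (Bad p))" by (rule card_UN_le[OF fin])
  finally have c1: "real (card {s\<in>?S. \<not> (\<bar>est L b K (tab n L b s v) - gsum g_np n v\<bar> \<le> e * gsum g_np n v)}) \<le> (\<Sum>p\<in>{..L}\<times>{..L}. real (card (Bad p)))"
    by (simp only: of_nat_sum[symmetric] of_nat_le_iff)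
  also have "\<dots> \<le> (\<Sum>p\<in>{..L}\<times>{..L}. real (card ?S) * (2/K + 8/(e^2*K) + 8*K/(e*2^b)))"
  proof (intro sum_mono)
    fix p assume p: "p \<in> {..L}\<times>{..L}"
    have "finite (T (fst p))" "T (fst p) \<subseteq> {..<2^L}" unfolding T_def using nL by auto
    thus "real (card (Bad p)) \<le> real (card ?S) * (2/K + 8/(e^2*K) + 8*K/(e*2^b))"
      unfolding Bad_def using bad_goodl[of "snd p" L "T (fst p)" e K b] p e K by auto
  qed
  also have "\<dots> = real (card ?S) * (real ((L+1)^2) * (2/K + 8/(e^2*K) + 8*K/(e*2^b)))"
    by (simp add: card_cartesian_product power2_eq_square)
  also have "\<dots> \<le> real (card ?S) * (1/3)" using bound by (intro mult_left_mono) auto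
  finally show ?thesis by simp
qed


lemma gsum_nonneg: "0 \<le> gsum g_np n v"
  unfolding gsum_def g_np_def by (intro sum_nonneg) auto

lemma sketch_solves:
  fixes e K eps :: real and S :: real
  assumes n1: "1 \<le> n" and M1: "1 \<le> M" and nM: "n * M < 2^L"
    and e: "0 < e" "e \<le> 1/2" "e \<le> eps" and K: "1 \<le> K"
    and bound: "real ((L+1)^2) * (2/K + 8/(e^2*K) + 8*K/(e*2^b)) \<le> 1/3"
    and WS: "real ((L+1)*(L+b) + (L+1)*2^b*(L+1)) \<le> S"
  shows "\<exists>A. solves_sum g_np eps n M A S"
proof -
  let ?W = "(L+1)*(L+b) + (L+1)*2^b*(L+1)"
  let ?Bd = "Seeds L (L+b) \<times> Pi\<^sub>E ({..L} \<times> Bk b) (\<lambda>_. {- int (n*M)..int (n*M)})"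
  have fB: "finite ?Bd" by (intro finite_cartesian_product finite_PiE) auto
  obtain A where A: "\<forall>D. valid_stream n M D \<longrightarrow>
     (\<forall>k\<le>length D. \<forall>st\<in>set_pmf (run A (take k D)). length st = ?W) \<and>
     alg_output A D = map_pmf (\<lambda>s. est L b K (tab n L b s (freq D))) (pmf_of_set (Seeds L (L+b)))"
    using sketch_alg[where S="Seeds L (L+b)" and Bd="?Bd" and W="?W" and sk="tab n L b" and up="upd n L b"
        and M=M and est="\<lambda>s t. est L b K t" and n=n]
      fB card_Bd[OF nM, of b] tab_update tab_bound Seeds_ne by auto
  have "solves_sum g_np eps n M A S"
    unfolding solves_sum_def
  proof (intro allI impI)
    fix D assume v: "valid_stream n M D"
    have c1: "\<forall>k\<le>length D. \<forall>s\<in>set_pmf (run A (take k D)). real (length s) \<le> S"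
      using A v WS by auto
    let ?g = "gsum g_np n (freq D)"
    let ?SS = "Seeds L (L+b)"
    let ?f = "\<lambda>s. est L b K (tab n L b s (freq D))"
    let ?E = "{G. (1 - eps) * ?g \<le> G \<and> G \<le> (1 + eps) * ?g}"
    have vb: "\<forall>i. \<bar>freq D i\<bar> \<le> int M" using v unfolding valid_stream_def by (metis order_refl take_all)
    have bad: "real (card {s\<in>?SS. \<not> (\<bar>?f s - ?g\<bar> \<le> e * ?g)}) \<le> real (card ?SS) / 3"
      by (rule main_count[OF e(1,2) K n1 M1 nM vb bound])
    have g0: "0 \<le> ?g" by (rule gsum_nonneg)
    have sub: "{s\<in>?SS. \<bar>?f s - ?g\<bar> \<le> e * ?g} \<subseteq> ?SS \<inter> ?f -` ?E"
    proof
      fix s assume s: "s \<in> {s\<in>?SS. \<bar>?f s - ?g\<bar> \<le> e * ?g}"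
      hence h: "\<bar>?f s - ?g\<bar> \<le> e * ?g" by simp
      have "e * ?g \<le> eps * ?g" using e(3) g0 by (intro mult_right_mono) auto
      hence "\<bar>?f s - ?g\<bar> \<le> eps * ?g" using h by linarith
      thus "s \<in> ?SS \<inter> ?f -` ?E" using s by (auto simp: abs_le_iff algebra_simps)
    qed
    have fS: "finite ?SS" by simp
    have "card ?SS = card {s\<in>?SS. \<bar>?f s - ?g\<bar> \<le> e * ?g} + card {s\<in>?SS. \<not> (\<bar>?f s - ?g\<bar> \<le> e * ?g)}"
      using fS by (subst card_Un_disjoint[symmetric]) (auto intro: arg_cong[where f=card])
    hence "real (card ?SS) = real (card {s\<in>?SS. \<bar>?f s - ?g\<bar> \<le> e * ?g}) + real (card {s\<in>?SS. \<not> (\<bar>?f s - ?g\<bar> \<le> e * ?g)})"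
      by (simp only: of_nat_add[symmetric])
    hence "real (card ?SS) * (2/3) \<le> real (card {s\<in>?SS. \<bar>?f s - ?g\<bar> \<le> e * ?g})" using bad by linarith
    also have "\<dots> \<le> real (card (?SS \<inter> ?f -` ?E))" using sub fS by (intro of_nat_mono card_mono) auto
    finally have c: "real (card ?SS) * (2/3) \<le> real (card (?SS \<inter> ?f -` ?E))" .
    have cpos: "real (card ?SS) > 0" using Seeds_ne fS by (simp add: card_gt_0_iff)
    have "measure_pmf.prob (alg_output A D) ?E = measure_pmf.prob (pmf_of_set ?SS) (?f -` ?E)"
      using A v by (simp add: measure_map_pmf)
    also have "\<dots> = real (card (?SS \<inter> ?f -` ?E)) / real (card ?SS)"
      by (rule measure_pmf_of_set[OF Seeds_ne fS])
    finally have c2: "measure_pmf.prob (alg_output A D) ?E \<ge> 2/3"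
      using c cpos by (simp add: field_simps)
    show "(\<forall>k\<le>length D. \<forall>s\<in>set_pmf (run A (take k D)). real (length s) \<le> S) \<and>
        2/3 \<le> measure_pmf.prob (alg_output A D) ?E" using c1 c2 by blast
  qed
  thus ?thesis by blast
qed


lemma exact_solves:
  fixes eps S :: real
  assumes M: "M < 2^L" and eps: "0 \<le> eps" and WS: "real (n * (L+1)) \<le> S"
  shows "\<exists>A. solves_sum g_np eps n M A S"
proof -
  let ?Bd = "{()} \<times> Pi\<^sub>E {1..n} (\<lambda>_. {- int M..int M})"
  let ?sk = "\<lambda>(s::unit) (v::nat\<Rightarrow>int). restrict v {1..n}"
  let ?up = "\<lambda>(s::unit) t (u::nat\<times>int). restrict (\<lambda>j. t j + (if fst u = j then snd u else 0)) {1..n}"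
  have fB: "finite ?Bd" by (intro finite_cartesian_product finite_PiE) auto
  have cB: "card ?Bd \<le> 2^(n*(L+1))"
  proof -
    have cs: "card {- int M..int M} = 2*M+1" by (rule card_sym_int)
    have "card ?Bd = card (Pi\<^sub>E {1..n} (\<lambda>_. {- int M..int M}))" by (simp add: card_cartesian_product)
    also have "\<dots> = (\<Prod>i\<in>{1..n}. card {- int M..int M})" by (rule card_PiE) simp
    also have "\<dots> = (2*M+1)^n" unfolding cs by simp
    finally have "card ?Bd = (2*M+1)^n" .
    also have "\<dots> \<le> (2^(L+1))^n" using M by (intro power_mono) auto
    also have "\<dots> = 2^(n*(L+1))" by (simp only: power_mult[symmetric] mult.commute)
    finally show ?thesis .
  qed
  have upd: "?sk s (freq (D@[x])) = ?up s (?sk s (freq D)) x" for s D x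
    by (rule restrict_ext) (simp add: freq_snoc)
  have bd: "(\<forall>i. \<bar>v i\<bar> \<le> int M) \<Longrightarrow> (s, ?sk s v) \<in> ?Bd" for s v
    by (auto simp: PiE_iff abs_le_iff) (metis minus_le_iff)
  obtain A where A: "\<forall>D. valid_stream n M D \<longrightarrow>
     (\<forall>k\<le>length D. \<forall>st\<in>set_pmf (run A (take k D)). length st = n*(L+1)) \<and>
     alg_output A D = map_pmf (\<lambda>s. gsum g_np n (?sk s (freq D))) (pmf_of_set {()})"
    using sketch_alg[where S="{()}" and Bd="?Bd" and W="n*(L+1)" and sk="?sk" and up="?up"
        and M=M and est="\<lambda>s t. gsum g_np n t" and n=n] fB cB upd bd by auto
  have "solves_sum g_np eps n M A S"
    unfolding solves_sum_def
  proof (intro allI impI)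
    fix D assume v: "valid_stream n M D"
    have c1: "\<forall>k\<le>length D. \<forall>s\<in>set_pmf (run A (take k D)). real (length s) \<le> S"
      using A v WS by auto
    let ?g = "gsum g_np n (freq D)"
    let ?E = "{G. (1 - eps) * ?g \<le> G \<and> G \<le> (1 + eps) * ?g}"
    have gr: "gsum g_np n (restrict (freq D) {1..n}) = ?g" unfolding gsum_def by simp
    have g0: "0 \<le> ?g" by (rule gsum_nonneg)
    have inE: "?g \<in> ?E" using g0 eps by (auto simp: algebra_simps)
    have "measure_pmf.prob (alg_output A D) ?E = measure_pmf.prob (pmf_of_set {()}) ((\<lambda>s. gsum g_np n (?sk s (freq D))) -` ?E)"
      using A v by (simp add: measure_map_pmf)
    also have "\<dots> = 1" using inE gr by (simp add: measure_pmf_of_set)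
    finally have c2: "2/3 \<le> measure_pmf.prob (alg_output A D) ?E" by simp
    show "(\<forall>k\<le>length D. \<forall>s\<in>set_pmf (run A (take k D)). real (length s) \<le> S) \<and>
        2/3 \<le> measure_pmf.prob (alg_output A D) ?E" using c1 c2 by blast
  qed
  thus ?thesis by blast
qed


definition lg :: "nat \<Rightarrow> nat" where "lg N = (LEAST k. N < 2^k)"

lemma lg_gt: "N < 2^(lg N)"
  unfolding lg_def by (rule LeastI[of _ N]) (rule less_exp)

lemma lg_le_self: "lg N \<le> N"
  unfolding lg_def by (rule Least_le) (rule less_exp)

lemma lg_le2: assumes "1 \<le> N" shows "2^(lg N) \<le> 2*N"
proof -
  have "lg N \<noteq> 0"
  proof
    assume "lg N = 0"
    hence "N < 1" using lg_gt[of N] by simp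
    thus False using assms by simp
  qed
  then obtain k where k: "lg N = Suc k" by (cases "lg N") auto
  have "\<not> N < 2^k" using not_less_Least[of k "\<lambda>k. N < 2^k"] k unfolding lg_def by simp
  hence "2^k \<le> N" by simp
  thus ?thesis using k by simp
qed

lemma lg_log: assumes "1 \<le> N" shows "real (lg N) \<le> log 2 (real N) + 1"
proof -
  have "real (2^(lg N)) \<le> real (2*N)" using lg_le2[OF assms] by (simp only: of_nat_le_iff)
  hence h: "(2::real)^(lg N) \<le> 2 * real N" by simp
  have "real (lg N) = log 2 ((2::real)^(lg N))" by (simp add: log_nat_power)
  also have "\<dots> \<le> log 2 (2 * real N)" using h assms by (subst log_le_cancel_iff) auto
  also have "\<dots> = 1 + log 2 (real N)" using assms by (subst log_mult) auto
  finally show ?thesis by simp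
qed

lemma bound_arith:
  fixes H P e K B :: real
  assumes H: "2 \<le> H" and P: "1 \<le> P" and e: "0 < e" and eH: "1 \<le> e * H"
    and K: "K = 60 * H^2 * P" and B: "48 * K * H * P \<le> B"
  shows "P * (2/K + 8/(e^2*K) + 8*K/(e*B)) \<le> 1/3"
proof -
  have Kp: "K > 0" using K H P by simp
  have "48 * K * H * P > 0" using Kp H P by simp
  hence Bp: "B > 0" using B by linarith
  have ie: "1/e \<le> H" using eH e by (simp add: field_simps)
  have ie2: "1/e^2 \<le> H^2"
  proof -
    have "(1/e)^2 \<le> H^2" using ie e by (intro power_mono) auto
    thus ?thesis by (simp add: power_divide)
  qed
  have t1: "2/K + 8/(e^2*K) \<le> 10*H^2/K"
  proof -
    have "8/(e^2*K) = 8 * (1/e^2) / K" by simp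
    also have "\<dots> \<le> 8 * H^2 / K" using ie2 Kp by (intro divide_right_mono mult_left_mono) auto
    finally have a: "8/(e^2*K) \<le> 8 * H^2 / K" .
    have "(1::real)^2 \<le> H^2" using H by (intro power_mono) auto
    hence "2/K \<le> 2*H^2/K" using Kp by (intro divide_right_mono) auto
    thus ?thesis using a by (simp add: add_divide_distrib[symmetric])
  qed
  have "10*H^2/K = 1/(6*P)" using K H P by (simp add: field_simps)
  hence t1': "2/K + 8/(e^2*K) \<le> 1/(6*P)" using t1 by simp
  have t2: "8*K/(e*B) \<le> 1/(6*P)"
  proof -
    have "8*K/(e*B) = 8*K*(1/e)/B" by simp
    also have "\<dots> \<le> 8*K*H/B" using ie Kp Bp by (intro divide_right_mono mult_left_mono) auto
    also have "\<dots> \<le> 8*K*H/(48*K*H*P)" using B Kp Bp H P by (intro divide_left_mono) (auto intro!: mult_pos_pos)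
    also have "\<dots> = 1/(6*P)" using Kp H P by (simp add: field_simps)
    finally show ?thesis .
  qed
  have "P * (2/K + 8/(e^2*K) + 8*K/(e*B)) \<le> P * (1/(6*P) + 1/(6*P))"
    using t1' t2 P by (intro mult_left_mono) auto
  also have "\<dots> = 1/3" using P by (simp add: field_simps)
  finally show ?thesis .
qed

definition hsp :: "(real \<Rightarrow> real) \<Rightarrow> nat \<Rightarrow> real \<Rightarrow> real" where
  "hsp h X0 x = 17280 * (h x + 3)^3 * (log 2 (max x 1) + 2)^6 + (if x < real X0 then real (X0 * (X0 + 1)) else 0)"

lemma hsp_subpoly:
  assumes h: "sub_polynomial h"
  shows "sub_polynomial (hsp h X0)"
proof -
  have hnn: "\<And>x. x \<ge> 0 \<Longrightarrow> h x \<ge> 0" using h unfolding sub_polynomial_def by blast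
  have hlim: "\<And>a. a > 0 \<Longrightarrow> ((\<lambda>x. x powr (-a) * h x) \<longlongrightarrow> 0) at_top"
    using h unfolding sub_polynomial_def by blast
  have lognn: "log 2 (max x 1) \<ge> 0" for x by simp
  have nn: "x \<ge> 0 \<Longrightarrow> hsp h X0 x \<ge> 0" for x
    unfolding hsp_def using hnn[of x] lognn[of x] by (intro add_nonneg_nonneg mult_nonneg_nonneg zero_le_power) auto
  have ge1: "x \<ge> 0 \<Longrightarrow> hsp h X0 x \<ge> 1" for x
  proof -
    assume x: "x \<ge> 0"
    have hx: "0 \<le> h x + 3" using hnn[OF x] by simp
    have "(3::real)^3 \<le> (h x + 3)^3" using hnn[OF x] by (intro power_mono) auto
    moreover have "(2::real)^6 \<le> (log 2 (max x 1) + 2)^6" using lognn[of x] by (intro power_mono) auto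
    ultimately have "17280 * 3^3 * 2^6 \<le> 17280 * (h x + 3)^3 * (log 2 (max x 1) + 2)^6"
      using hx by (intro mult_mono mult_left_mono) auto
    moreover have "(1::real) \<le> 17280 * 3^3 * 2^6" by simp
    moreover have "0 \<le> (if x < real X0 then real (X0 * (X0 + 1)) else 0)" by simp
    ultimately show ?thesis unfolding hsp_def by linarith
  qed
  show ?thesis unfolding sub_polynomial_def
  proof (intro conjI allI impI)
    fix x :: real assume "x \<ge> 0" thus "hsp h X0 x \<ge> 0" by (rule nn)
  next
    fix a :: real assume a: "a > 0"
    have "filterlim (\<lambda>x::real. x powr a) at_top at_top" using a by real_asymp
    moreover have "\<forall>\<^sub>F x in at_top. x powr a \<le> x powr a * hsp h X0 x"
    proof -
      have "\<forall>\<^sub>F x in at_top. (x::real) \<ge> 0" by (rule eventually_ge_at_top)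
      thus ?thesis
      proof (rule eventually_mono)
        fix x :: real assume x: "x \<ge> 0"
        have "x powr a * 1 \<le> x powr a * hsp h X0 x" using ge1[OF x] by (intro mult_left_mono) auto
        thus "x powr a \<le> x powr a * hsp h X0 x" by simp
      qed
    qed
    ultimately show "filterlim (\<lambda>x. x powr a * hsp h X0 x) at_top at_top" by (rule filterlim_at_top_mono)
  next
    fix a :: real assume a: "a > 0"
    define f1 where "f1 = (\<lambda>x::real. x powr (-(a/6)) * h x + 3 * x powr (-(a/6)))"
    define f2 where "f2 = (\<lambda>x::real. x powr (-(a/12)) * (log 2 x + 2))"
    have l1: "(f1 \<longlongrightarrow> 0) at_top"
    proof -
      have "((\<lambda>x. x powr (-(a/6)) * h x) \<longlongrightarrow> 0) at_top" using hlim[of "a/6"] a by simp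
      moreover have "((\<lambda>x::real. 3 * x powr (-(a/6))) \<longlongrightarrow> 0) at_top" using a by real_asymp
      ultimately show ?thesis unfolding f1_def using tendsto_add by fastforce
    qed
    have l2: "(f2 \<longlongrightarrow> 0) at_top" unfolding f2_def using a by real_asymp
    have lim: "((\<lambda>x. 17280 * f1 x ^ 3 * f2 x ^ 6) \<longlongrightarrow> 0) at_top"
    proof -
      have "((\<lambda>x. 17280 * f1 x ^ 3 * f2 x ^ 6) \<longlongrightarrow> 17280 * 0 ^ 3 * 0 ^ 6) at_top"
        by (intro tendsto_mult tendsto_power l1 l2 tendsto_const)
      thus ?thesis by simp
    qed
    have ev: "\<forall>\<^sub>F x in at_top. 17280 * f1 x ^ 3 * f2 x ^ 6 = x powr (-a) * hsp h X0 x"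
    proof -
      have "\<forall>\<^sub>F x in at_top. (x::real) \<ge> max (real X0) 1" by (rule eventually_ge_at_top)
      thus ?thesis
      proof (rule eventually_mono)
        fix x :: real assume x: "x \<ge> max (real X0) 1"
        hence x1: "x \<ge> 1" and xX: "\<not> x < real X0" by auto
        have xp: "x > 0" using x1 by simp
        have "f1 x = x powr (-(a/6)) * (h x + 3)" unfolding f1_def by (simp add: algebra_simps)
        hence e1: "f1 x ^ 3 = x powr (-(a/2)) * (h x + 3)^3"
          using xp by (simp add: power_mult_distrib powr_power)
        have e2: "f2 x ^ 6 = x powr (-(a/2)) * (log 2 x + 2)^6"
          unfolding f2_def using xp by (simp add: power_mult_distrib powr_power)
        have e3: "x powr (-(a/2)) * x powr (-(a/2)) = x powr (-a)"
          by (simp add: powr_add[symmetric])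
        have e4: "hsp h X0 x = 17280 * (h x + 3)^3 * (log 2 x + 2)^6"
          unfolding hsp_def using x1 xX by simp
        have "17280 * f1 x ^ 3 * f2 x ^ 6 = 17280 * (h x + 3)^3 * (log 2 x + 2)^6 * (x powr (-(a/2)) * x powr (-(a/2)))"
          unfolding e1 e2 by (simp only: mult_ac)
        also have "\<dots> = x powr (-a) * hsp h X0 x" unfolding e3 e4 by (simp only: mult_ac)
        finally show "17280 * f1 x ^ 3 * f2 x ^ 6 = x powr (-a) * hsp h X0 x" .
      qed
    qed
    show "((\<lambda>x. x powr (-a) * hsp h X0 x) \<longlongrightarrow> 0) at_top"
      using tendsto_cong[OF ev] lim by simp
  qed
qed


lemma W_bound:
  fixes L b tg :: nat
  assumes "2^b \<le> 2 * tg"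
  shows "(L+1)*(L+b) + (L+1)*2^b*(L+1) \<le> 6 * (L+1)^2 * tg"
proof -
  have b: "b \<le> 2^b" using less_exp[of b] by simp
  have "(L+1)*(L+b) = (L+1)*L + (L+1)*b" by (simp add: algebra_simps)
  also have "(L+1)*L \<le> (L+1)*(L+1)*2^b"
  proof -
    have "(L+1)*L*1 \<le> ((L+1)*(L+1))*2^b" by (rule mult_le_mono) simp_all
    thus ?thesis by simp
  qed
  also have "(L+1)*b \<le> (L+1)*(L+1)*2^b"
  proof -
    have "1*((L+1)*b) \<le> (L+1)*((L+1)*2^b)" by (rule mult_le_mono) (simp, rule mult_le_mono2[OF b])
    thus ?thesis by (simp only: mult_1 mult.assoc)
  qed
  finally have "(L+1)*(L+b) + (L+1)*2^b*(L+1) \<le> 3 * ((L+1)^2 * 2^b)" by (simp add: power2_eq_square algebra_simps)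
  also have "\<dots> \<le> 3 * ((L+1)^2 * (2*tg))" using assms by simp
  finally show ?thesis by simp
qed

lemma per_nm:
  fixes h :: "real \<Rightarrow> real" and eps :: "nat \<Rightarrow> nat \<Rightarrow> real"
  assumes hs: "sub_polynomial h" and epsb: "\<forall>n M. eps n M \<ge> 1 / h (real (n*M))"
    and X0: "\<forall>x::real. real X0 \<le> x \<longrightarrow> h x > 0"
    and n1: "1 \<le> n" and M1: "1 \<le> M"
  shows "\<exists>A. solves_sum g_np (eps n M) n M A (hsp h X0 (real (n*M)))"
proof -
  define N where "N = n*M"
  have N1: "1 \<le> N" unfolding N_def using n1 M1 by simp
  define L where "L = lg N"
  have nM: "n * M < 2^L" unfolding L_def N_def[symmetric] by (rule lg_gt)
  have hnn: "h (real N) \<ge> 0" using hs unfolding sub_polynomial_def by simp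
  have ep: "eps n M \<ge> 1 / h (real N)" using epsb unfolding N_def by simp
  have nN: "n \<le> N" and MN: "M \<le> N" unfolding N_def using n1 M1 by simp_all
  show ?thesis
  proof (cases "h (real N) > 0")
    case True
    define Hn where "Hn = nat \<lceil>max (h (real N)) 2\<rceil>"
    define H where "H = real Hn"
    have HR: "H = real_of_int \<lceil>max (h (real N)) 2\<rceil>" unfolding H_def Hn_def by simp
    have H2: "2 \<le> H" unfolding HR by linarith
    have Hh: "h (real N) \<le> H" unfolding HR by linarith
    have H3: "H \<le> h (real N) + 3" unfolding HR using hnn by linarith
    define e where "e = min (eps n M) (1/2)"
    have ipos: "1 / h (real N) > 0" using True by simp
    have "0 < eps n M" using ep ipos by linarith
    hence epos: "0 < e" unfolding e_def by simp
    have e2: "e \<le> 1/2" "e \<le> eps n M" unfolding e_def by simp_all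
    have eH: "1 \<le> e * H"
    proof (cases "eps n M \<le> 1/2")
      case True
      hence "e = eps n M" unfolding e_def by simp
      moreover have "1 / h (real N) * H \<le> eps n M * H" using ep H2 by (intro mult_right_mono) auto
      moreover have "1 \<le> 1 / h (real N) * H" using Hh True \<open>h (real N) > 0\<close> by (simp add: field_simps)
      ultimately show ?thesis by simp
    next
      case False
      hence "e = 1/2" unfolding e_def by simp
      hence "e * H = H / 2" by simp
      thus ?thesis using H2 by linarith
    qed
    define P where "P = real ((L+1)^2)"
    have P1: "1 \<le> P" unfolding P_def by simp
    define K where "K = 60 * H^2 * P"
    define tg where "tg = 2880 * Hn^3 * (L+1)^4"
    have Hn2: "2 \<le> Hn" using H2 unfolding H_def by simp
    have tg1: "1 \<le> tg" unfolding tg_def using Hn2 by simp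
    define b where "b = lg tg"
    have btg: "tg < 2^b" unfolding b_def by (rule lg_gt)
    have btg2: "2^b \<le> 2 * tg" unfolding b_def by (rule lg_le2[OF tg1])
    have P2: "P^2 = real (L+1)^4" unfolding P_def by (simp add: power_mult[symmetric])
    have "48 * K * H * P = 2880 * H^3 * P^2" unfolding K_def by (simp add: algebra_simps power2_eq_square power3_eq_cube)
    also have "\<dots> = real tg" unfolding tg_def P2 H_def by simp
    also have "\<dots> \<le> 2^b"
    proof -
      have "real tg \<le> real (2^b)" using btg by (simp only: of_nat_le_iff less_imp_le)
      thus ?thesis by simp
    qed
    finally have B: "48 * K * H * P \<le> 2^b" .
    have bound: "real ((L+1)^2) * (2/K + 8/(e^2*K) + 8*K/(e*2^b)) \<le> 1/3"
      using bound_arith[OF H2 P1 epos eH K_def B] unfolding P_def .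
    have K1: "1 \<le> K"
    proof -
      have "(2::real)^2 \<le> H^2" using H2 by (intro power_mono) auto
      hence "1 * 1 \<le> H^2 * P" using P1 by (intro mult_mono) auto
      thus ?thesis unfolding K_def by simp
    qed
    have WS: "real ((L+1)*(L+b) + (L+1)*2^b*(L+1)) \<le> hsp h X0 (real (n*M))"
    proof -
      have "(L+1)*(L+b) + (L+1)*2^b*(L+1) \<le> 6 * (L+1)^2 * tg" by (rule W_bound[OF btg2])
      also have "6 * (L+1)^2 * tg = 17280 * Hn^3 * (L+1)^6"
      proof -
        have "(L+1)^6 = (L+1)^2 * (L+1)^4" by (simp add: power_add[symmetric])
        thus ?thesis unfolding tg_def by (simp add: mult_ac)
      qed
      finally have "real ((L+1)*(L+b) + (L+1)*2^b*(L+1)) \<le> real (17280 * Hn^3 * (L+1)^6)" by (simp only: of_nat_le_iff)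
      also have "\<dots> = 17280 * H^3 * (real L + 1)^6" unfolding H_def by (simp add: add.commute)
      also have "\<dots> \<le> 17280 * (h (real N) + 3)^3 * (log 2 (real N) + 2)^6"
      proof -
        have "real L \<le> log 2 (real N) + 1" unfolding L_def by (rule lg_log[OF N1])
        hence "(real L + 1)^6 \<le> (log 2 (real N) + 2)^6" by (intro power_mono) auto
        moreover have "H^3 \<le> (h (real N) + 3)^3" using H3 H2 by (intro power_mono) auto
        ultimately show ?thesis using H2 hnn by (intro mult_mono mult_left_mono) auto
      qed
      also have "\<dots> \<le> hsp h X0 (real N)"
      proof -
        have "max (real N) 1 = real N" using N1 by simp
        thus ?thesis unfolding hsp_def by simp
      qed
      finally show ?thesis unfolding N_def .
    qed
    show ?thesis by (rule sketch_solves[OF n1 M1 nM epos e2 K1 bound WS])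
  next
    case False
    have "real N < real X0"
    proof (rule ccontr)
      assume "\<not> real N < real X0"
      hence "real X0 \<le> real N" by simp
      hence "h (real N) > 0" using X0 by blast
      thus False using False by simp
    qed
    hence NX: "N < X0" by simp
    have MltL: "M < 2^L" using le_less_trans[OF MN[unfolded N_def] nM] .
    have "0 \<le> 1 / h (real N)" using hnn by simp
    hence eps0: "0 \<le> eps n M" using ep by linarith
    have WS: "real (n * (L+1)) \<le> hsp h X0 (real (n*M))"
    proof -
      have "L \<le> N" unfolding L_def by (rule lg_le_self)
      hence a: "L + 1 \<le> X0 + 1" using NX by simp
      have c: "n \<le> X0" using nN NX by simp
      have "n * (L+1) \<le> X0 * (X0 + 1)" by (rule mult_le_mono[OF c a])
      hence "real (n * (L+1)) \<le> real (X0 * (X0 + 1))" by (simp only: of_nat_le_iff)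
      moreover have "0 \<le> 17280 * (h (real N) + 3)^3 * (log 2 (max (real N) 1) + 2)^6"
        using hnn by (intro mult_nonneg_nonneg zero_le_power) auto
      ultimately show ?thesis unfolding hsp_def N_def[symmetric] using \<open>real N < real X0\<close> by simp
    qed
    show ?thesis by (rule exact_solves[OF MltL eps0 WS])
  qed
qed


theorem proposition54:
  shows "one_pass_tractable g_np"
  unfolding one_pass_tractable_def
proof (intro allI impI)
  fix h :: "real \<Rightarrow> real" and eps :: "nat \<Rightarrow> nat \<Rightarrow> real"
  assume as: "sub_polynomial h \<and> (\<forall>n M. 1 / h (real (n * M)) \<le> eps n M)"
  hence hs: "sub_polynomial h" and epsb: "\<forall>n M. eps n M \<ge> 1 / h (real (n*M))" by auto
  have "\<forall>a>0. filterlim (\<lambda>x. x powr a * h x) at_top at_top" using hs unfolding sub_polynomial_def by blast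
  hence "filterlim (\<lambda>x. x powr 1 * h x) at_top at_top" by (metis zero_less_one)
  hence ev1: "\<forall>\<^sub>F x in at_top. 1 \<le> x powr 1 * h x" by (simp add: filterlim_at_top)
  have ev2: "\<forall>\<^sub>F x in at_top. (1::real) \<le> x" by (rule eventually_ge_at_top)
  have "\<forall>\<^sub>F x in at_top. h x > 0"
    using ev1 ev2
  proof (rule eventually_elim2)
    fix x :: real assume a: "1 \<le> x powr 1 * h x" and x: "1 \<le> x"
    have "x powr 1 = x" using x by simp
    hence "0 < x * h x" using a by simp
    thus "h x > 0" using x by (simp add: zero_less_mult_iff)
  qed
  then obtain X where X: "\<And>x. x \<ge> X \<Longrightarrow> h x > 0" by (auto simp: eventually_at_top_linorder)
  define X0 where "X0 = nat \<lceil>X\<rceil>"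
  have X0: "\<forall>x::real. real X0 \<le> x \<longrightarrow> h x > 0"
  proof (intro allI impI)
    fix x :: real assume "real X0 \<le> x"
    moreover have "X \<le> real X0" unfolding X0_def by linarith
    ultimately show "h x > 0" using X by simp
  qed
  have "\<forall>p. \<exists>A. 1 \<le> fst p \<and> 1 \<le> snd p \<longrightarrow> solves_sum g_np (eps (fst p) (snd p)) (fst p) (snd p) A (hsp h X0 (real (fst p * snd p)))"
    using per_nm[OF hs epsb X0] by blast
  then obtain f where f: "\<forall>p. 1 \<le> fst p \<and> 1 \<le> snd p \<longrightarrow> solves_sum g_np (eps (fst p) (snd p)) (fst p) (snd p) (f p) (hsp h X0 (real (fst p * snd p)))"
    by (metis choice)
  have "sub_polynomial (hsp h X0)" by (rule hsp_subpoly[OF hs])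
  moreover have "\<forall>n M. 1 \<le> n \<and> 1 \<le> M \<longrightarrow> solves_sum g_np (eps n M) n M (f (n, M)) (hsp h X0 (real (n * M)))"
    using f by (metis fst_conv snd_conv)
  ultimately show "\<exists>hs A. sub_polynomial hs \<and>
           (\<forall>n M. 1 \<le> n \<and> 1 \<le> M \<longrightarrow> solves_sum g_np (eps n M) n M (A n M) (hs (real (n * M))))"
    by (intro exI[of _ "hsp h X0"] exI[of _ "\<lambda>n M. f (n, M)"]) simp
qed


end
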